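(* Stuttering $H_\mu$ with unique stuttering and full basis is at least as expressive as mumbling $H_\mu$ with unique mumbling and full basis.
   Context: Fix a finite set $\mathit{AP}$. A trace is an infinite sequence $P_0m_0P_1m_1\dots$ with $P_i\subseteq\mathit{AP}$, $m_i\in\{\mathit{int},\mathit{call},\mathit{ret}\}$; $\mathit{tr}(i)=P_i$. Successor functions: $\mathit{succ}_\mathsf{g}(\mathit{tr},i)=i+1$; $\mathit{succ}_\mathsf{a}(\mathit{tr},i)=i+1$ if $m_i=\mathit{int}$, and if $m_i=\mathit{call}$ the least $j>i$ such that among $m_i,\dots,m_{j-1}$ the numbers of $\mathit{call}$ and $\mathit{ret}$ coincide (undefined if none), undefined if $m_i=\mathit{ret}$; $\mathit{succ}_\mathsf{c}(\mathit{tr},i)$ the largest $j<i$ with $m_j=\mathit{call}$ such that among $m_{j+1},\dots,m_{i-1}$ the numbers of $\mathit{call}$ and $\mathit{ret}$ coincide (undefined if none). Mumbling $H_\mu$: trace formulae $\delta ::= \mathit{ap}\mid Y\mid\delta\lor\delta\mid\lnot\delta\mid\bigcirc^\mathsf{f}\delta\mid\mu Y.\delta$ ($\mathsf{f}\in\{\mathsf{g},\mathsf{a},\mathsf{c}\}$); multitrace formulae $\psi ::= [\delta]_\pi\mid X\mid\psi\lor\psi\mid\lnot\psi\mid\bigcirc^\Delta\psi\mid\mu X.\psi$ with $\Delta$ mapping trace variables to trace formulae; hyperproperty formulae $\varphi ::= \exists\pi.\varphi\mid\forall\pi.\varphi\mid\psi$; fixpoint variables occur positively; closed = all variables bound. Trace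 semantics $\llbracket\delta\rrbracket^{\mathit{tr}}_{\mathcal{V}}\subseteq\mathbb{N}_0$: $\mathit{ap}\mapsto\{i\mid\mathit{ap}\in\mathit{tr}(i)\}$, $Y\mapsto\mathcal{V}(Y)$, union, complement, $\bigcirc^\mathsf{f}\delta\mapsto\{i\mid\mathit{succ}_\mathsf{f}(\mathit{tr},i)$ defined and in $\llbracket\delta\rrbracket\}$, $\mu Y.\delta\mapsto\bigcap\{I\mid\llbracket\delta\rrbracket_{\mathcal{V}[Y\mapsto I]}\subseteq I\}$. $\mathit{succ}_\delta(\mathit{tr},i)=\min\{j>i\mid j\in\llbracket\delta\rrbracket^{\mathit{tr}}\}$ if nonempty, else $i+1$; $\mathit{succ}_\Delta(\Pi,v)$ componentwise for a trace assignment $\Pi$ on $\pi_1,\dots,\pi_n$. $\llbracket\psi\rrbracket^\Pi_{\mathcal{W}}\subseteq\mathbb{N}_0^n$: $[\delta]_{\pi_j}\mapsto\{v\mid v_j\in\llbracket\delta\rrbracket^{\Pi(\pi_j)}\}$, $X\mapsto\mathcal{W}(X)$, Boolean as usual, $\bigcirc^\Delta\psi\mapsto\{v\mid\mathit{succ}_\Delta(\Pi,v)\in\llbracket\psi\rrbracket\}$, $\mu X$ least fixpoint. $\Pi\models_\mathcal{T}\exists\pi.\varphi$ iff some $\mathit{tr}\in\mathcal{T}$ gives $\Pi[\pi\mapsto\mathit{tr}]\models_\mathcal{T}\varphi$; $\forall$ for all; $\Pi\models_\mathcal{T}\psi$ iff $(0,\dots,0)\in\llbracket\psi\rrbracket^\Pi$.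 For closed $\varphi$ and a set of traces $\mathcal{T}$, $\mathcal{T}\models\varphi$ iff the empty assignment satisfies $\varphi$ over $\mathcal{T}$. Stuttering $H_\mu$ is identical except that multitrace next operators are $\bigcirc^\Gamma\psi$ with $\Gamma$ mapping each trace variable to a finite set of trace formulae; for a finite set $\gamma$, $\mathit{succ}_\gamma(\mathit{tr},i)=\min\{j>i\mid$ for some $\delta\in\gamma$: $i\in\llbracket\delta\rrbracket^{\mathit{tr}}\not\Leftrightarrow j\in\llbracket\delta\rrbracket^{\mathit{tr}}\}$ if nonempty, else $i+1$; $\mathit{succ}_\Gamma$ componentwise and $\llbracket\bigcirc^\Gamma\psi\rrbracket=\{v\mid\mathit{succ}_\Gamma(\Pi,v)\in\llbracket\psi\rrbracket\}$. Unique mumbling (stuttering): all multitrace next operators use the same $\Delta$ ($\Gamma$). Full basis: no restriction on the trace formulae used in tests and in $\Delta$/$\Gamma$. $L_1$ is at least as expressive as $L_2$ if for every closed hyperproperty formula $\varphi$ of $L_2$ there is a closed $\varphi'$ of $L_1$ with $\mathcal{T}\models\varphi$ iff $\mathcal{T}\models\varphi'$ for all sets of traces $\mathcal{T}$. *)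

theory Defs
  imports Main
begin

datatype mode = MInt | MCall | MRet

text \<open>A trace P0 m0 P1 m1 ... over atomic propositions of the finite type 'ap:
  position i carries the pair (P_i, m_i).\<close>
type_synonym 'ap trace = "nat \<Rightarrow> 'ap set \<times> mode"

definition tr_at :: "'ap trace \<Rightarrow> nat \<Rightarrow> 'ap set" where
  "tr_at tr i = fst (tr i)"

definition md :: "'ap trace \<Rightarrow> nat \<Rightarrow> mode" where
  "md tr i = snd (tr i)"

definition balanced :: "'ap trace \<Rightarrow> nat \<Rightarrow> nat \<Rightarrow> bool" where
  "balanced tr i j \<longleftrightarrow>
     card {k. i \<le> k \<and> k < j \<and> md tr k = MCall} = card {k. i \<le> k \<and> k < j \<and> md tr k = MRet}"

datatype succ_kind = SG | SA | SC

fun succ_f :: "succ_kind \<Rightarrow> 'ap trace \<Rightarrow> nat \<Rightarrow> nat option" where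
  "succ_f SG tr i = Some (Suc i)"
| "succ_f SA tr i =
     (case md tr i of
        MInt \<Rightarrow> Some (Suc i)
      | MCall \<Rightarrow> (if \<exists>j>i. balanced tr i j then Some (LEAST j. i < j \<and> balanced tr i j) else None)
      | MRet \<Rightarrow> None)"
| "succ_f SC tr i =
     (if \<exists>j<i. md tr j = MCall \<and> balanced tr (Suc j) i
      then Some (GREATEST j. j < i \<and> md tr j = MCall \<and> balanced tr (Suc j) i) else None)"

datatype 'ap tf =
    TAP 'ap
  | TVar nat
  | TOr "'ap tf" "'ap tf"
  | TNot "'ap tf"
  | TNext succ_kind "'ap tf"
  | TMu nat "'ap tf"

fun tsem :: "'ap trace \<Rightarrow> (nat \<Rightarrow> nat set) \<Rightarrow> 'ap tf \<Rightarrow> nat set" where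
  "tsem tr V (TAP a) = {i. a \<in> tr_at tr i}"
| "tsem tr V (TVar Y) = V Y"
| "tsem tr V (TOr d1 d2) = tsem tr V d1 \<union> tsem tr V d2"
| "tsem tr V (TNot d) = - tsem tr V d"
| "tsem tr V (TNext f d) = {i. \<exists>j. succ_f f tr i = Some j \<and> j \<in> tsem tr V d}"
| "tsem tr V (TMu Y d) = \<Inter> {I. tsem tr (V(Y := I)) d \<subseteq> I}"

fun tfv :: "'ap tf \<Rightarrow> nat set" where
  "tfv (TAP a) = {}"
| "tfv (TVar Y) = {Y}"
| "tfv (TOr d1 d2) = tfv d1 \<union> tfv d2"
| "tfv (TNot d) = tfv d"
| "tfv (TNext f d) = tfv d"
| "tfv (TMu Y d) = tfv d - {Y}"

text \<open>tpol p Y d: every free occurrence of Y in d is under an even (p = True)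
  resp. odd (p = False) number of negations.\<close>
fun tpol :: "bool \<Rightarrow> nat \<Rightarrow> 'ap tf \<Rightarrow> bool" where
  "tpol p Y (TAP a) = True"
| "tpol p Y (TVar Z) = (p \<or> Z \<noteq> Y)"
| "tpol p Y (TOr d1 d2) = (tpol p Y d1 \<and> tpol p Y d2)"
| "tpol p Y (TNot d) = tpol (\<not> p) Y d"
| "tpol p Y (TNext f d) = tpol p Y d"
| "tpol p Y (TMu Z d) = (Z = Y \<or> tpol p Y d)"

fun twf :: "'ap tf \<Rightarrow> bool" where
  "twf (TAP a) = True"
| "twf (TVar Y) = True"
| "twf (TOr d1 d2) = (twf d1 \<and> twf d2)"
| "twf (TNot d) = twf d"
| "twf (TNext f d) = twf d"
| "twf (TMu Y d) = (tpol True Y d \<and> twf d)"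

definition tf_ok :: "'ap tf \<Rightarrow> bool" where
  "tf_ok d \<longleftrightarrow> twf d \<and> tfv d = {}"

text \<open>The next operator carries a map from trace variables to labels 'n:
  for mumbling 'n = 'ap tf (a map Delta), for stuttering 'n = 'ap tf list
  (a map Gamma to finite sets of trace formulae, represented by lists).\<close>
datatype ('ap, 'n) mf =
    MTest "'ap tf" nat
  | MVar nat
  | MOr "('ap, 'n) mf" "('ap, 'n) mf"
  | MNot "('ap, 'n) mf"
  | MNext "nat \<Rightarrow> 'n" "('ap, 'n) mf"
  | MMu nat "('ap, 'n) mf"

datatype ('ap, 'n) hf =
    HEx nat "('ap, 'n) hf"
  | HAll nat "('ap, 'n) hf"
  | HBody "('ap, 'n) mf"

text \<open>A trace assignment is partial (None = unassigned); positions v assign a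
  position to every trace variable (only assigned ones matter).\<close>
type_synonym 'ap tassign = "nat \<Rightarrow> 'ap trace option"

definition succ_vec ::
  "('ap trace \<Rightarrow> 'n \<Rightarrow> nat \<Rightarrow> nat) \<Rightarrow> 'ap tassign \<Rightarrow> (nat \<Rightarrow> 'n) \<Rightarrow> (nat \<Rightarrow> nat) \<Rightarrow> (nat \<Rightarrow> nat)" where
  "succ_vec sN \<Pi> D v = (\<lambda>\<pi>. case \<Pi> \<pi> of Some tr \<Rightarrow> sN tr (D \<pi>) (v \<pi>) | None \<Rightarrow> v \<pi>)"

fun msem :: "('ap trace \<Rightarrow> 'n \<Rightarrow> nat \<Rightarrow> nat) \<Rightarrow> 'ap tassign \<Rightarrow> (nat \<Rightarrow> (nat \<Rightarrow> nat) set)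
              \<Rightarrow> ('ap, 'n) mf \<Rightarrow> (nat \<Rightarrow> nat) set" where
  "msem sN \<Pi> W (MTest d \<pi>) =
     {v. case \<Pi> \<pi> of Some tr \<Rightarrow> v \<pi> \<in> tsem tr (\<lambda>_. {}) d | None \<Rightarrow> False}"
| "msem sN \<Pi> W (MVar X) = W X"
| "msem sN \<Pi> W (MOr p q) = msem sN \<Pi> W p \<union> msem sN \<Pi> W q"
| "msem sN \<Pi> W (MNot p) = - msem sN \<Pi> W p"
| "msem sN \<Pi> W (MNext D p) = {v. succ_vec sN \<Pi> D v \<in> msem sN \<Pi> W p}"
| "msem sN \<Pi> W (MMu X p) = \<Inter> {I. msem sN \<Pi> (W(X := I)) p \<subseteq> I}"

fun hsat :: "('ap trace \<Rightarrow> 'n \<Rightarrow> nat \<Rightarrow> nat) \<Rightarrow> 'ap trace set \<Rightarrow> 'ap tassign \<Rightarrow> ('ap, 'n) hf \<Rightarrow> bool" where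
  "hsat sN T \<Pi> (HEx \<pi> p) = (\<exists>tr\<in>T. hsat sN T (\<Pi>(\<pi> := Some tr)) p)"
| "hsat sN T \<Pi> (HAll \<pi> p) = (\<forall>tr\<in>T. hsat sN T (\<Pi>(\<pi> := Some tr)) p)"
| "hsat sN T \<Pi> (HBody p) = ((\<lambda>_. 0) \<in> msem sN \<Pi> (\<lambda>_. {}) p)"

definition hmodels :: "('ap trace \<Rightarrow> 'n \<Rightarrow> nat \<Rightarrow> nat) \<Rightarrow> 'ap trace set \<Rightarrow> ('ap, 'n) hf \<Rightarrow> bool" where
  "hmodels sN T p \<longleftrightarrow> hsat sN T (\<lambda>_. None) p"

fun mfv :: "('ap, 'n) mf \<Rightarrow> nat set" where
  "mfv (MTest d \<pi>) = {}"
| "mfv (MVar X) = {X}"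
| "mfv (MOr p q) = mfv p \<union> mfv q"
| "mfv (MNot p) = mfv p"
| "mfv (MNext D p) = mfv p"
| "mfv (MMu X p) = mfv p - {X}"

fun mpol :: "bool \<Rightarrow> nat \<Rightarrow> ('ap, 'n) mf \<Rightarrow> bool" where
  "mpol p X (MTest d \<pi>) = True"
| "mpol p X (MVar Z) = (p \<or> Z \<noteq> X)"
| "mpol p X (MOr a b) = (mpol p X a \<and> mpol p X b)"
| "mpol p X (MNot a) = mpol (\<not> p) X a"
| "mpol p X (MNext D a) = mpol p X a"
| "mpol p X (MMu Z a) = (Z = X \<or> mpol p X a)"

fun mwf :: "('n \<Rightarrow> bool) \<Rightarrow> nat set \<Rightarrow> ('ap, 'n) mf \<Rightarrow> bool" where
  "mwf lok B (MTest d \<pi>) = (\<pi> \<in> B \<and> tf_ok d)"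
| "mwf lok B (MVar X) = True"
| "mwf lok B (MOr p q) = (mwf lok B p \<and> mwf lok B q)"
| "mwf lok B (MNot p) = mwf lok B p"
| "mwf lok B (MNext D p) = ((\<forall>\<pi>\<in>B. lok (D \<pi>)) \<and> mwf lok B p)"
| "mwf lok B (MMu X p) = (mpol True X p \<and> mwf lok B p)"

fun hclosed_in :: "('n \<Rightarrow> bool) \<Rightarrow> nat set \<Rightarrow> ('ap, 'n) hf \<Rightarrow> bool" where
  "hclosed_in lok B (HEx \<pi> p) = hclosed_in lok (insert \<pi> B) p"
| "hclosed_in lok B (HAll \<pi> p) = hclosed_in lok (insert \<pi> B) p"
| "hclosed_in lok B (HBody p) = (mwf lok B p \<and> mfv p = {})"

definition hclosed :: "('n \<Rightarrow> bool) \<Rightarrow> ('ap, 'n) hf \<Rightarrow> bool" where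
  "hclosed lok p \<longleftrightarrow> hclosed_in lok {} p"

fun mnexts :: "('ap, 'n) mf \<Rightarrow> (nat \<Rightarrow> 'n) set" where
  "mnexts (MTest d \<pi>) = {}"
| "mnexts (MVar X) = {}"
| "mnexts (MOr p q) = mnexts p \<union> mnexts q"
| "mnexts (MNot p) = mnexts p"
| "mnexts (MNext D p) = insert D (mnexts p)"
| "mnexts (MMu X p) = mnexts p"

fun hvars :: "('ap, 'n) hf \<Rightarrow> nat set" where
  "hvars (HEx \<pi> p) = insert \<pi> (hvars p)"
| "hvars (HAll \<pi> p) = insert \<pi> (hvars p)"
| "hvars (HBody p) = {}"

fun hbody :: "('ap, 'n) hf \<Rightarrow> ('ap, 'n) mf" where
  "hbody (HEx \<pi> p) = hbody p"
| "hbody (HAll \<pi> p) = hbody p"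
| "hbody (HBody p) = p"

definition hunique :: "('n \<Rightarrow> 'n \<Rightarrow> bool) \<Rightarrow> ('ap, 'n) hf \<Rightarrow> bool" where
  "hunique leq p \<longleftrightarrow>
     (\<forall>D1\<in>mnexts (hbody p). \<forall>D2\<in>mnexts (hbody p). \<forall>\<pi>\<in>hvars p. leq (D1 \<pi>) (D2 \<pi>))"

definition succ_mumble :: "'ap trace \<Rightarrow> 'ap tf \<Rightarrow> nat \<Rightarrow> nat" where
  "succ_mumble tr d i =
     (if \<exists>j>i. j \<in> tsem tr (\<lambda>_. {}) d then (LEAST j. i < j \<and> j \<in> tsem tr (\<lambda>_. {}) d) else Suc i)"

definition succ_stutter :: "'ap trace \<Rightarrow> 'ap tf list \<Rightarrow> nat \<Rightarrow> nat" where
  "succ_stutter tr g i =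
     (if \<exists>j>i. \<exists>d\<in>set g. (i \<in> tsem tr (\<lambda>_. {}) d) \<noteq> (j \<in> tsem tr (\<lambda>_. {}) d)
      then (LEAST j. i < j \<and> (\<exists>d\<in>set g. (i \<in> tsem tr (\<lambda>_. {}) d) \<noteq> (j \<in> tsem tr (\<lambda>_. {}) d)))
      else Suc i)"

type_synonym 'ap mumbling_hf = "('ap, 'ap tf) hf"
type_synonym 'ap stuttering_hf = "('ap, 'ap tf list) hf"

definition mumbling_closed :: "'ap mumbling_hf \<Rightarrow> bool" where
  "mumbling_closed p \<longleftrightarrow> hclosed tf_ok p"

definition stuttering_closed :: "'ap stuttering_hf \<Rightarrow> bool" where
  "stuttering_closed p \<longleftrightarrow> hclosed (\<lambda>g. \<forall>d\<in>set g. tf_ok d) p"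

definition unique_mumbling :: "'ap mumbling_hf \<Rightarrow> bool" where
  "unique_mumbling p \<longleftrightarrow> hunique (=) p"

definition unique_stuttering :: "'ap stuttering_hf \<Rightarrow> bool" where
  "unique_stuttering p \<longleftrightarrow> hunique (\<lambda>g1 g2. set g1 = set g2) p"

definition mumbling_models :: "'ap trace set \<Rightarrow> 'ap mumbling_hf \<Rightarrow> bool" where
  "mumbling_models T p \<longleftrightarrow> hmodels succ_mumble T p"

definition stuttering_models :: "'ap trace set \<Rightarrow> 'ap stuttering_hf \<Rightarrow> bool" where
  "stuttering_models T p \<longleftrightarrow> hmodels succ_stutter T p"

end

theory Submission
  imports Defs
begin


fun gsem :: "((nat \<Rightarrow> 'n) \<Rightarrow> 'v \<Rightarrow> 'v) \<Rightarrow> ('ap tf \<Rightarrow> nat \<Rightarrow> 'v set) \<Rightarrow> (nat \<Rightarrow> 'v set)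
              \<Rightarrow> ('ap, 'n) mf \<Rightarrow> 'v set" where
  "gsem s tv W (MTest d \<pi>) = tv d \<pi>"
| "gsem s tv W (MVar X) = W X"
| "gsem s tv W (MOr p q) = gsem s tv W p \<union> gsem s tv W q"
| "gsem s tv W (MNot p) = - gsem s tv W p"
| "gsem s tv W (MNext D p) = {v. s D v \<in> gsem s tv W p}"
| "gsem s tv W (MMu X p) = \<Inter> {I. gsem s tv (W(X := I)) p \<subseteq> I}"

lemma msem_gsem:
  "msem sN \<Pi> W \<psi> = gsem (succ_vec sN \<Pi>)
     (\<lambda>d \<pi>. {v. case \<Pi> \<pi> of Some tr \<Rightarrow> v \<pi> \<in> tsem tr (\<lambda>_. {}) d | None \<Rightarrow> False}) W \<psi>"
  by (induction \<psi> arbitrary: W) auto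

fun mono_ok :: "('ap, 'n) mf \<Rightarrow> bool" where
  "mono_ok (MTest d \<pi>) = True"
| "mono_ok (MVar X) = True"
| "mono_ok (MOr p q) = (mono_ok p \<and> mono_ok q)"
| "mono_ok (MNot p) = mono_ok p"
| "mono_ok (MNext D p) = mono_ok p"
| "mono_ok (MMu X p) = (mpol True X p \<and> mono_ok p)"

lemma mwf_mono_ok: "mwf lok B \<psi> \<Longrightarrow> mono_ok \<psi>"
  by (induction \<psi>) auto

lemma gsem_cong_env: "(\<forall>X\<in>mfv \<psi>. W X = W' X) \<Longrightarrow> gsem s tv W \<psi> = gsem s tv W' \<psi>"
proof (induction \<psi> arbitrary: W W')
  case (MMu X p)
  have "\<And>I. gsem s tv (W(X := I)) p = gsem s tv (W'(X := I)) p"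
    using MMu by (intro MMu.IH) auto
  then show ?case by simp
next
  case (MOr a b)
  then show ?case by (metis UnCI gsem.simps(3) mfv.simps(3))
next
  case (MNot a) then show ?case by simp
next
  case (MNext D a)
  then have "gsem s tv W a = gsem s tv W' a" by simp
  then show ?case by simp
qed auto

lemma Inter_pre_mono: "(\<And>K. f K \<subseteq> g K) \<Longrightarrow> \<Inter>{K. f K \<subseteq> K} \<subseteq> \<Inter>{K. g K \<subseteq> K}"
  by blast

lemma gsem_mono_gen:
  "mpol p X \<psi> \<Longrightarrow> I \<subseteq> J \<Longrightarrow>
   (if p then gsem s tv (W(X:=I)) \<psi> \<subseteq> gsem s tv (W(X:=J)) \<psi>
         else gsem s tv (W(X:=J)) \<psi> \<subseteq> gsem s tv (W(X:=I)) \<psi>)"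
proof (induction \<psi> arbitrary: p W)
  case (MVar Z)
  then show ?case by auto
next
  case (MOr a b)
  then have "mpol p X a" "mpol p X b" by auto
  from MOr.IH(1)[OF this(1) MOr.prems(2), of W] MOr.IH(2)[OF this(2) MOr.prems(2), of W]
  show ?case by (cases p) auto
next
  case (MNot a)
  from MNot.prems have "mpol (\<not>p) X a" by simp
  from MNot.IH[OF this MNot.prems(2), of W] show ?case by (cases p) auto
next
  case (MNext D a)
  then have "mpol p X a" by auto
  from MNext.IH[OF this MNext.prems(2), of W]
  show ?case by (cases p) auto
next
  case (MMu Z a)
  show ?case
  proof (cases "Z = X")
    case True
    then show ?thesis by (simp only: gsem.simps fun_upd_upd) simp
  next
    case False
    with MMu.prems have pa: "mpol p X a" by simp
    have c: "\<And>K. (if p then gsem s tv (W(Z:=K, X:=I)) a \<subseteq> gsem s tv (W(Z:=K, X:=J)) a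
         else gsem s tv (W(Z:=K, X:=J)) a \<subseteq> gsem s tv (W(Z:=K, X:=I)) a)"
      using MMu.IH[OF pa MMu.prems(2)] by blast
    have e1: "\<And>K M. W(X:=M, Z:=K) = W(Z:=K, X:=M)" using False by (auto simp: fun_eq_iff)
    show ?thesis
    proof (cases p)
      case True
      with c have "\<And>K. gsem s tv (W(X:=I, Z:=K)) a \<subseteq> gsem s tv (W(X:=J, Z:=K)) a"
        by (simp add: e1)
      then show ?thesis using True by (simp only: gsem.simps if_True) (rule Inter_pre_mono)
    next
      case False
      with c have "\<And>K. gsem s tv (W(X:=J, Z:=K)) a \<subseteq> gsem s tv (W(X:=I, Z:=K)) a"
        by (simp add: e1)
      then show ?thesis using False by (simp only: gsem.simps if_False) (rule Inter_pre_mono)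
    qed
  qed
qed simp

lemma gsem_mono:
  "mpol True X \<psi> \<Longrightarrow> mono (\<lambda>I. gsem s tv (W(X:=I)) \<psi>)"
  by (rule monoI) (drule gsem_mono_gen[where p=True], auto)

lemma gsem_Mu_lfp: "gsem s tv W (MMu X p) = lfp (\<lambda>I. gsem s tv (W(X:=I)) p)"
  by (simp add: lfp_def Inf_set_def)

lemma gsem_Mu_unfold: "mpol True X p \<Longrightarrow>
   gsem s tv (W(X := gsem s tv W (MMu X p))) p = gsem s tv W (MMu X p)"
  unfolding gsem_Mu_lfp by (rule lfp_unfold[OF gsem_mono, symmetric])


lemma gsem_preimage:
  assumes "mono_ok \<psi>" "\<forall>D\<in>mnexts \<psi>. \<forall>w. F (s' D w) = s D (F w)"
  shows "gsem s' (\<lambda>d \<pi>. F -` tv d \<pi>) (\<lambda>X. F -` W X) \<psi> = F -` gsem s tv W \<psi>"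
  using assms
proof (induction \<psi> arbitrary: W)
  case (MMu X p)
  define f where "f I = gsem s tv (W(X:=I)) p" for I
  define g where "g J = gsem s' (\<lambda>d \<pi>. F -` tv d \<pi>) ((\<lambda>Y. F -` W Y)(X:=J)) p" for J
  have mp: "mpol True X p" "mono_ok p" using MMu.prems by auto
  have gF: "g (F -` I) = F -` f I" for I
  proof -
    have e: "(\<lambda>Y. F -` W Y)(X := F -` I) = (\<lambda>Y. F -` (W(X:=I)) Y)" by (auto simp: fun_eq_iff)
    have "\<forall>D\<in>mnexts p. \<forall>w. F (s' D w) = s D (F w)" using MMu.prems(2) by simp
    then show ?thesis unfolding g_def f_def e by (rule MMu.IH[OF mp(2)])
  qed
  have mf: "mono f" unfolding f_def by (rule gsem_mono[OF mp(1)])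
  have mg: "mono g" unfolding g_def by (rule gsem_mono[OF mp(1)])
  have L: "gsem s tv W (MMu X p) = lfp f" unfolding f_def by (rule gsem_Mu_lfp)
  have M: "gsem s' (\<lambda>d \<pi>. F -` tv d \<pi>) (\<lambda>X. F -` W X) (MMu X p) = lfp g"
    unfolding g_def by (rule gsem_Mu_lfp)
  have 1: "lfp g \<subseteq> F -` lfp f"
    by (rule lfp_lowerbound) (simp add: gF lfp_unfold[OF mf, symmetric])
  define X0 where "X0 = {x. F -` {x} \<subseteq> lfp g}"
  have "f X0 \<subseteq> X0"
  proof
    fix x assume x: "x \<in> f X0"
    have "F -` X0 \<subseteq> lfp g" unfolding X0_def by auto
    then have "g (F -` X0) \<subseteq> lfp g" using mg by (metis lfp_unfold monoD)
    have "F -` {x} \<subseteq> lfp g"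
    proof
      fix u assume "u \<in> F -` {x}"
      then have "u \<in> F -` f X0" using x by simp
      then have "u \<in> g (F -` X0)" using gF by simp
      then show "u \<in> lfp g" using \<open>g (F -` X0) \<subseteq> lfp g\<close> by blast
    qed
    then show "x \<in> X0" unfolding X0_def by simp
  qed
  then have "lfp f \<subseteq> X0" by (rule lfp_lowerbound)
  then have 2: "F -` lfp f \<subseteq> lfp g" unfolding X0_def by auto
  show ?case using 1 2 L M by auto
next
  case (MNext D p)
  then show ?case by auto
qed auto

fun mmap :: "(nat \<Rightarrow> 'ap tf \<Rightarrow> 'ap tf) \<Rightarrow> ((nat \<Rightarrow> 'n) \<Rightarrow> (nat \<Rightarrow> 'm)) \<Rightarrow> ('ap, 'n) mf \<Rightarrow> ('ap, 'm) mf" where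
  "mmap \<tau> lab (MTest d \<pi>) = MTest (\<tau> \<pi> d) \<pi>"
| "mmap \<tau> lab (MVar X) = MVar X"
| "mmap \<tau> lab (MOr p q) = MOr (mmap \<tau> lab p) (mmap \<tau> lab q)"
| "mmap \<tau> lab (MNot p) = MNot (mmap \<tau> lab p)"
| "mmap \<tau> lab (MNext D p) = MNext (lab D) (mmap \<tau> lab p)"
| "mmap \<tau> lab (MMu X p) = MMu X (mmap \<tau> lab p)"

fun mtestsl :: "('ap, 'n) mf \<Rightarrow> ('ap tf \<times> nat) list" where
  "mtestsl (MTest d \<pi>) = [(d, \<pi>)]"
| "mtestsl (MVar X) = []"
| "mtestsl (MOr p q) = mtestsl p @ mtestsl q"
| "mtestsl (MNot p) = mtestsl p"
| "mtestsl (MNext D p) = mtestsl p"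
| "mtestsl (MMu X p) = mtestsl p"

lemma mmap_id: "mmap (\<lambda>\<pi> d. d) id \<psi> = \<psi>"
  by (induction \<psi>) auto

lemma mfv_mmap[simp]: "mfv (mmap \<tau> lab \<psi>) = mfv \<psi>"
  by (induction \<psi>) auto

lemma mpol_mmap[simp]: "mpol p X (mmap \<tau> lab \<psi>) = mpol p X \<psi>"
  by (induction \<psi> arbitrary: p) auto

lemma mono_ok_mmap[simp]: "mono_ok (mmap \<tau> lab \<psi>) = mono_ok \<psi>"
  by (induction \<psi>) auto

lemma mnexts_mmap[simp]: "mnexts (mmap \<tau> lab \<psi>) = lab ` mnexts \<psi>"
  by (induction \<psi>) auto

definition sucN :: "(nat \<Rightarrow> 'n) \<Rightarrow> nat \<Rightarrow> nat" where "sucN D n = Suc n"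

lemma loc:
  assumes "mono_ok \<psi>"
    "\<forall>(d,\<pi>)\<in>set (mtestsl \<psi>). tv2 (\<tau> \<pi> d) \<pi> \<inter> {k..} = tv1 d \<pi> \<inter> {k..}"
    "\<forall>X\<in>mfv \<psi>. W2 X \<inter> {k..} = W1 X \<inter> {k..}"
  shows "gsem sucN tv2 W2 (mmap \<tau> lab \<psi>) \<inter> {k..} = gsem sucN tv1 W1 \<psi> \<inter> {k..}"
  using assms
proof (induction \<psi> arbitrary: W1 W2)
  case (MTest d \<pi>)
  then show ?case by simp
next
  case (MVar X)
  then show ?case by simp
next
  case (MOr p q)
  have "gsem sucN tv2 W2 (mmap \<tau> lab p) \<inter> {k..} = gsem sucN tv1 W1 p \<inter> {k..}"
    by (rule MOr.IH(1)) (use MOr.prems in simp_all)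
  moreover have "gsem sucN tv2 W2 (mmap \<tau> lab q) \<inter> {k..} = gsem sucN tv1 W1 q \<inter> {k..}"
    by (rule MOr.IH(2)) (use MOr.prems in simp_all)
  ultimately show ?case by (simp add: Int_Un_distrib2)
next
  case (MNot p)
  have "gsem sucN tv2 W2 (mmap \<tau> lab p) \<inter> {k..} = gsem sucN tv1 W1 p \<inter> {k..}"
    by (rule MNot.IH) (use MNot.prems in simp_all)
  then show ?case by simp blast
next
  case (MNext D p)
  have e: "gsem sucN tv2 W2 (mmap \<tau> lab p) \<inter> {k..} = gsem sucN tv1 W1 p \<inter> {k..}"
    by (rule MNext.IH) (use MNext.prems in simp_all)
  show ?case
  proof (intro set_eqI iffI)
    fix n assume "n \<in> gsem sucN tv2 W2 (mmap \<tau> lab (MNext D p)) \<inter> {k..}"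
    then have "Suc n \<in> gsem sucN tv2 W2 (mmap \<tau> lab p) \<inter> {k..}" "n \<ge> k" by (auto simp: sucN_def)
    then have "Suc n \<in> gsem sucN tv1 W1 p" "n \<ge> k" using e by blast+
    then show "n \<in> gsem sucN tv1 W1 (MNext D p) \<inter> {k..}" by (simp add: sucN_def)
  next
    fix n assume "n \<in> gsem sucN tv1 W1 (MNext D p) \<inter> {k..}"
    then have "Suc n \<in> gsem sucN tv1 W1 p \<inter> {k..}" "n \<ge> k" by (auto simp: sucN_def)
    then have "Suc n \<in> gsem sucN tv2 W2 (mmap \<tau> lab p)" "n \<ge> k" using e by blast+
    then show "n \<in> gsem sucN tv2 W2 (mmap \<tau> lab (MNext D p)) \<inter> {k..}" by (simp add: sucN_def)
  qed
next
  case (MMu X p)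
  define f1 where "f1 I = gsem sucN tv1 (W1(X:=I)) p" for I
  define f2 where "f2 J = gsem sucN tv2 (W2(X:=J)) (mmap \<tau> lab p)" for J
  have mp: "mpol True X p" "mono_ok p" using MMu.prems by auto
  have t: "\<forall>(d,\<pi>)\<in>set (mtestsl p). tv2 (\<tau> \<pi> d) \<pi> \<inter> {k..} = tv1 d \<pi> \<inter> {k..}"
    using MMu.prems(2) by simp
  have IH: "f2 J \<inter> {k..} = f1 I \<inter> {k..}" if "J \<inter> {k..} = I \<inter> {k..}" for I J
  proof -
    have w: "\<forall>Y\<in>mfv p. (W2(X:=J)) Y \<inter> {k..} = (W1(X:=I)) Y \<inter> {k..}"
    proof
      fix Y assume "Y \<in> mfv p"
      then show "(W2(X:=J)) Y \<inter> {k..} = (W1(X:=I)) Y \<inter> {k..}"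
        using MMu.prems(3) that by (cases "Y = X") auto
    qed
    show ?thesis unfolding f1_def f2_def by (rule MMu.IH[OF mp(2) t w])
  qed
  have m1: "mono f1" unfolding f1_def by (rule gsem_mono[OF mp(1)])
  have m2: "mono f2" unfolding f2_def by (rule gsem_mono) (simp add: mp(1))
  have L1: "gsem sucN tv1 W1 (MMu X p) = lfp f1" unfolding f1_def by (rule gsem_Mu_lfp)
  have L2: "gsem sucN tv2 W2 (mmap \<tau> lab (MMu X p)) = lfp f2" unfolding f2_def
    by (simp only: mmap.simps) (rule gsem_Mu_lfp)
  have a: "lfp f1 \<inter> {k..} \<subseteq> lfp f2"
  proof -
    define L' where "L' = (lfp f2 \<inter> {k..}) \<union> - {k..}"
    have eq: "L' \<inter> {k..} = lfp f2 \<inter> {k..}" unfolding L'_def by blast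
    have "f1 L' \<subseteq> L'"
    proof
      fix x assume x: "x \<in> f1 L'"
      show "x \<in> L'"
      proof (cases "x \<ge> k")
        case True
        have "f1 L' \<inter> {k..} = f2 (lfp f2) \<inter> {k..}" by (rule IH[OF eq[symmetric], symmetric])
        then have "x \<in> f2 (lfp f2)" using x True by blast
        then have "x \<in> lfp f2" using lfp_unfold[OF m2] by simp
        then show ?thesis using True unfolding L'_def by simp
      next
        case False then show ?thesis unfolding L'_def by simp
      qed
    qed
    then have "lfp f1 \<subseteq> L'" by (rule lfp_lowerbound)
    then show ?thesis unfolding L'_def by blast
  qed
  have b: "lfp f2 \<inter> {k..} \<subseteq> lfp f1"
  proof -
    define L' where "L' = (lfp f1 \<inter> {k..}) \<union> - {k..}"
    have eq: "lfp f1 \<inter> {k..} = L' \<inter> {k..}" unfolding L'_def by blast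
    have "f2 L' \<subseteq> L'"
    proof
      fix x assume x: "x \<in> f2 L'"
      show "x \<in> L'"
      proof (cases "x \<ge> k")
        case True
        have "f2 L' \<inter> {k..} = f1 (lfp f1) \<inter> {k..}" by (rule IH[OF eq[symmetric]])
        then have "x \<in> f1 (lfp f1)" using x True by blast
        then have "x \<in> lfp f1" using lfp_unfold[OF m1] by simp
        then show ?thesis using True unfolding L'_def by simp
      next
        case False then show ?thesis unfolding L'_def by simp
      qed
    qed
    then have "lfp f2 \<subseteq> L'" by (rule lfp_lowerbound)
    then show ?thesis unfolding L'_def by blast
  qed
  show ?case using a b unfolding L1 L2 by blast
qed



fun subst :: "(nat \<Rightarrow> ('ap, 'n) mf option) \<Rightarrow> ('ap, 'n) mf \<Rightarrow> ('ap, 'n) mf" where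
  "subst \<sigma> (MTest d \<pi>) = MTest d \<pi>"
| "subst \<sigma> (MVar X) = (case \<sigma> X of Some \<phi> \<Rightarrow> \<phi> | None \<Rightarrow> MVar X)"
| "subst \<sigma> (MOr p q) = MOr (subst \<sigma> p) (subst \<sigma> q)"
| "subst \<sigma> (MNot p) = MNot (subst \<sigma> p)"
| "subst \<sigma> (MNext D p) = MNext D (subst \<sigma> p)"
| "subst \<sigma> (MMu X p) = MMu X (subst (\<sigma>(X := None)) p)"

definition sclosed :: "(nat \<Rightarrow> ('ap, 'n) mf option) \<Rightarrow> bool" where
  "sclosed \<sigma> \<longleftrightarrow> (\<forall>X \<phi>. \<sigma> X = Some \<phi> \<longrightarrow> mfv \<phi> = {})"

lemma sclosed_upd: "sclosed \<sigma> \<Longrightarrow> sclosed (\<sigma>(X := None))"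
  unfolding sclosed_def by auto

lemma sclosed_upd': "sclosed \<sigma> \<Longrightarrow> sclosed (\<lambda>a. if a = X then None else \<sigma> a)"
  unfolding sclosed_def by auto

lemma gsem_subst:
  "sclosed \<sigma> \<Longrightarrow> gsem s tv W (subst \<sigma> \<psi>) =
     gsem s tv (\<lambda>X. case \<sigma> X of Some \<phi> \<Rightarrow> gsem s tv W \<phi> | None \<Rightarrow> W X) \<psi>"
proof (induction \<psi> arbitrary: \<sigma> W)
  case (MMu X p)
  have "gsem s tv (W(X:=I)) (subst (\<sigma>(X := None)) p) =
        gsem s tv ((\<lambda>X. case \<sigma> X of Some \<phi> \<Rightarrow> gsem s tv W \<phi> | None \<Rightarrow> W X)(X := I)) p" for I
  proof -
    have "(\<lambda>Y. case (\<sigma>(X := None)) Y of Some \<phi> \<Rightarrow> gsem s tv (W(X:=I)) \<phi> | None \<Rightarrow> (W(X:=I)) Y)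
        = ((\<lambda>X. case \<sigma> X of Some \<phi> \<Rightarrow> gsem s tv W \<phi> | None \<Rightarrow> W X)(X := I))"
    proof
      fix Y show "(case (\<sigma>(X := None)) Y of Some \<phi> \<Rightarrow> gsem s tv (W(X:=I)) \<phi> | None \<Rightarrow> (W(X:=I)) Y)
        = ((\<lambda>X. case \<sigma> X of Some \<phi> \<Rightarrow> gsem s tv W \<phi> | None \<Rightarrow> W X)(X := I)) Y"
      proof (cases "Y = X")
        case False
        show ?thesis
        proof (cases "\<sigma> Y")
          case (Some \<phi>)
          then have "mfv \<phi> = {}" using MMu.prems unfolding sclosed_def by auto
          then have "gsem s tv (W(X:=I)) \<phi> = gsem s tv W \<phi>" by (intro gsem_cong_env) auto
          then show ?thesis using False Some by simp
        qed (use False in simp)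
      qed simp
    qed
    note e = this
    have IH': "gsem s tv (W(X:=I)) (subst (\<sigma>(X := None)) p) = gsem s tv (\<lambda>Y. case (\<sigma>(X := None)) Y of Some \<phi> \<Rightarrow> gsem s tv (W(X:=I)) \<phi> | None \<Rightarrow> (W(X:=I)) Y) p"
      by (rule MMu.IH) (rule sclosed_upd[OF MMu.prems])
    show ?thesis by (simp only: IH' e)
  qed
  then show ?case by simp
next
  case (MVar X) then show ?case by (cases "\<sigma> X") auto
next
  case (MOr p q) then show ?case by simp
next
  case (MNot p) then show ?case by simp
next
  case (MNext D p) then show ?case by simp
qed simp

lemma mfv_subst: "sclosed \<sigma> \<Longrightarrow> mfv (subst \<sigma> \<psi>) = mfv \<psi> - {X. \<sigma> X \<noteq> None}"
proof (induction \<psi> arbitrary: \<sigma>)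
  case (MVar X) then show ?case by (cases "\<sigma> X") (auto simp: sclosed_def)
next
  case (MMu X p)
  have "mfv (subst (\<sigma>(X:=None)) p) = mfv p - {Y. (\<sigma>(X:=None)) Y \<noteq> None}"
    by (rule MMu.IH[OF sclosed_upd[OF MMu.prems]])
  then show ?case by auto
qed auto

lemma mpol_closed: "X \<notin> mfv \<phi> \<Longrightarrow> mpol p X \<phi>"
  by (induction \<phi> arbitrary: p) auto

lemma mpol_subst: "mpol p X \<psi> \<Longrightarrow> \<sigma> X = None \<Longrightarrow> sclosed \<sigma> \<Longrightarrow> mpol p X (subst \<sigma> \<psi>)"
proof (induction \<psi> arbitrary: p \<sigma>)
  case (MVar Y)
  then show ?case
    by (cases "\<sigma> Y") (auto simp: sclosed_def intro: mpol_closed)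
next
  case (MMu Z a)
  show ?case
  proof (cases "Z = X")
    case False
    have "mpol p X (subst (\<sigma>(Z := None)) a)"
      by (rule MMu.IH) (use MMu.prems False in \<open>simp_all add: sclosed_upd sclosed_upd'\<close>)
    then show ?thesis by simp
  qed simp
qed auto

definition sprop :: "(('ap, 'n) mf \<Rightarrow> bool) \<Rightarrow> (nat \<Rightarrow> ('ap, 'n) mf option) \<Rightarrow> bool" where
  "sprop P \<sigma> \<longleftrightarrow> (\<forall>X \<phi>. \<sigma> X = Some \<phi> \<longrightarrow> P \<phi>)"

lemma sprop_upd: "sprop P \<sigma> \<Longrightarrow> sprop P (\<sigma>(X := None))"
  unfolding sprop_def by auto

lemma sprop_upd': "sprop P \<sigma> \<Longrightarrow> sprop P (\<lambda>a. if a = X then None else \<sigma> a)"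
  unfolding sprop_def by auto

lemma mono_ok_subst: "mono_ok \<psi> \<Longrightarrow> sprop mono_ok \<sigma> \<Longrightarrow> sclosed \<sigma> \<Longrightarrow> mono_ok (subst \<sigma> \<psi>)"
proof (induction \<psi> arbitrary: \<sigma>)
  case (MVar X) then show ?case by (cases "\<sigma> X") (auto simp: sprop_def)
next
  case (MMu X p)
  have "mono_ok (subst (\<sigma>(X := None)) p)"
    by (rule MMu.IH) (use MMu.prems in \<open>simp_all add: sclosed_upd sprop_upd sclosed_upd' sprop_upd'\<close>)
  moreover have "mpol True X (subst (\<sigma>(X := None)) p)"
    by (rule mpol_subst) (use MMu.prems in \<open>simp_all add: sclosed_upd sclosed_upd'\<close>)
  ultimately show ?case by simp
qed auto

lemma mwf_subst: "mwf lok B \<psi> \<Longrightarrow> sprop (mwf lok B) \<sigma> \<Longrightarrow> sclosed \<sigma> \<Longrightarrow> mwf lok B (subst \<sigma> \<psi>)"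
proof (induction \<psi> arbitrary: \<sigma>)
  case (MVar X) then show ?case by (cases "\<sigma> X") (auto simp: sprop_def)
next
  case (MMu X p)
  have "mwf lok B (subst (\<sigma>(X := None)) p)"
    by (rule MMu.IH) (use MMu.prems in \<open>simp_all add: sclosed_upd sprop_upd sclosed_upd' sprop_upd'\<close>)
  moreover have "mpol True X (subst (\<sigma>(X := None)) p)"
    by (rule mpol_subst) (use MMu.prems in \<open>simp_all add: sclosed_upd sclosed_upd'\<close>)
  ultimately show ?case by simp
qed auto

lemma mnexts_subst: "sprop (\<lambda>\<phi>. mnexts \<phi> \<subseteq> S) \<sigma> \<Longrightarrow> mnexts \<psi> \<subseteq> S \<Longrightarrow> mnexts (subst \<sigma> \<psi>) \<subseteq> S"
proof (induction \<psi> arbitrary: \<sigma>)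
  case (MVar X) then show ?case by (cases "\<sigma> X") (auto simp: sprop_def)
next
  case (MMu X p)
  have "mnexts (subst (\<sigma>(X := None)) p) \<subseteq> S"
    by (rule MMu.IH) (use MMu.prems in \<open>simp_all add: sprop_upd sprop_upd'\<close>)
  then show ?case by simp
qed auto

definition MFalse :: "('ap, 'n) mf" where "MFalse = MMu 0 (MVar 0)"

lemma gsem_MFalse[simp]: "gsem s tv W MFalse = {}"
  unfolding MFalse_def by auto

fun At :: "(nat \<Rightarrow> 'ap tf \<Rightarrow> 'ap tf) \<Rightarrow> (nat \<Rightarrow> 'm) \<Rightarrow> (nat \<Rightarrow> ('ap, 'm) mf option)
           \<Rightarrow> ('ap, 'n) mf \<Rightarrow> ('ap, 'm) mf" where
  "At \<tau> \<Gamma> \<sigma> (MTest d \<pi>) = MTest d \<pi>"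
| "At \<tau> \<Gamma> \<sigma> (MVar X) = MFalse"
| "At \<tau> \<Gamma> \<sigma> (MOr p q) = MOr (At \<tau> \<Gamma> \<sigma> p) (At \<tau> \<Gamma> \<sigma> q)"
| "At \<tau> \<Gamma> \<sigma> (MNot p) = MNot (At \<tau> \<Gamma> \<sigma> p)"
| "At \<tau> \<Gamma> \<sigma> (MNext D p) = MNext \<Gamma> (subst \<sigma> (mmap \<tau> (\<lambda>_. \<Gamma>) p))"
| "At \<tau> \<Gamma> \<sigma> (MMu X p) = At \<tau> \<Gamma> (\<sigma>(X := Some (subst \<sigma> (mmap \<tau> (\<lambda>_. \<Gamma>) (MMu X p))))) p"


definition good0 where
  "good0 tv1 tv2 \<tau> l \<longleftrightarrow> (\<forall>(d,\<pi>)\<in>set l. (0 \<in> tv2 d \<pi> \<longleftrightarrow> 0 \<in> tv1 d \<pi>) \<and> tv2 (\<tau> \<pi> d) \<pi> \<inter> {1..} = tv1 d \<pi> \<inter> {1..})"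

definition envok where
  "envok \<sigma> W1 Wt \<longleftrightarrow> (\<forall>X \<phi>. \<sigma> X = Some \<phi> \<longrightarrow> 0 \<notin> W1 X \<and> W1 X \<inter> {1..} = Wt \<phi> \<inter> {1..})"

lemma good0_app[simp]: "good0 tv1 tv2 \<tau> (l1 @ l2) \<longleftrightarrow> good0 tv1 tv2 \<tau> l1 \<and> good0 tv1 tv2 \<tau> l2"
  unfolding good0_def by auto

lemma good0_loc: "good0 tv1 tv2 \<tau> l \<Longrightarrow> \<forall>(d,\<pi>)\<in>set l. tv2 (\<tau> \<pi> d) \<pi> \<inter> {1..} = tv1 d \<pi> \<inter> {1..}"
  unfolding good0_def by auto

lemma Int_eq_mem: "A \<inter> K = B \<inter> K \<Longrightarrow> x \<in> K \<Longrightarrow> x \<in> A \<longleftrightarrow> x \<in> B"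
  by blast

lemma At_correct:
  assumes "mono_ok \<psi>" "good0 tv1 tv2 \<tau> (mtestsl \<psi>)"
   "mfv \<psi> \<subseteq> {X. \<sigma> X \<noteq> None}" "sclosed \<sigma>"
   "envok \<sigma> W1 (gsem sucN tv2 W2)"
  shows "0 \<in> gsem sucN tv2 W2 (At \<tau> \<Gamma> \<sigma> \<psi>) \<longleftrightarrow> 0 \<in> gsem sucN tv1 W1 \<psi>"
  using assms
proof (induction \<psi> arbitrary: \<sigma> W1)
  case (MTest d \<pi>)
  then show ?case unfolding good0_def by simp
next
  case (MVar X)
  then obtain \<phi> where "\<sigma> X = Some \<phi>" by auto
  then show ?case using MVar.prems(5) unfolding envok_def by simp
next
  case (MOr p q)
  have "0 \<in> gsem sucN tv2 W2 (At \<tau> \<Gamma> \<sigma> p) \<longleftrightarrow> 0 \<in> gsem sucN tv1 W1 p"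
    by (rule MOr.IH(1)) (use MOr.prems in simp_all)
  moreover have "0 \<in> gsem sucN tv2 W2 (At \<tau> \<Gamma> \<sigma> q) \<longleftrightarrow> 0 \<in> gsem sucN tv1 W1 q"
    by (rule MOr.IH(2)) (use MOr.prems in simp_all)
  ultimately show ?case by simp
next
  case (MNot p)
  have "0 \<in> gsem sucN tv2 W2 (At \<tau> \<Gamma> \<sigma> p) \<longleftrightarrow> 0 \<in> gsem sucN tv1 W1 p"
    by (rule MNot.IH) (use MNot.prems in simp_all)
  then show ?case by simp
next
  case (MNext D p)
  define W\<sigma> where "W\<sigma> = (\<lambda>X. case \<sigma> X of Some \<phi> \<Rightarrow> gsem sucN tv2 W2 \<phi> | None \<Rightarrow> W2 X)"
  have e1: "gsem sucN tv2 W2 (subst \<sigma> (mmap \<tau> (\<lambda>_. \<Gamma>) p)) = gsem sucN tv2 W\<sigma> (mmap \<tau> (\<lambda>_. \<Gamma>) p)"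
    unfolding W\<sigma>_def by (rule gsem_subst[OF MNext.prems(4)])
  have e2: "gsem sucN tv2 W\<sigma> (mmap \<tau> (\<lambda>_. \<Gamma>) p) \<inter> {1..} = gsem sucN tv1 W1 p \<inter> {1..}"
  proof (rule loc)
    show "mono_ok p" using MNext.prems(1) by simp
    show "\<forall>(d,\<pi>)\<in>set (mtestsl p). tv2 (\<tau> \<pi> d) \<pi> \<inter> {1..} = tv1 d \<pi> \<inter> {1..}"
    proof -
      have "good0 tv1 tv2 \<tau> (mtestsl p)" using MNext.prems(2) by simp
      then show ?thesis by (rule good0_loc)
    qed
    show "\<forall>X\<in>mfv p. W\<sigma> X \<inter> {1..} = W1 X \<inter> {1..}"
    proof
      fix X assume "X \<in> mfv p"
      then obtain \<phi> where s: "\<sigma> X = Some \<phi>" using MNext.prems(3) by auto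
      then show "W\<sigma> X \<inter> {1..} = W1 X \<inter> {1..}" using MNext.prems(5) unfolding W\<sigma>_def envok_def
        by simp
    qed
  qed
  have "0 \<in> gsem sucN tv2 W2 (At \<tau> \<Gamma> \<sigma> (MNext D p)) \<longleftrightarrow> Suc 0 \<in> gsem sucN tv2 W\<sigma> (mmap \<tau> (\<lambda>_. \<Gamma>) p)"
    using e1 by (simp add: sucN_def)
  also have "\<dots> \<longleftrightarrow> Suc 0 \<in> gsem sucN tv1 W1 p" by (rule Int_eq_mem[OF e2]) simp
  also have "\<dots> \<longleftrightarrow> 0 \<in> gsem sucN tv1 W1 (MNext D p)" by (simp add: sucN_def)
  finally show ?case .
next
  case (MMu X p)
  define c where "c = subst \<sigma> (mmap \<tau> (\<lambda>_. \<Gamma>) (MMu X p))"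
  define \<sigma>' where "\<sigma>' = \<sigma>(X := Some c)"
  define L where "L = gsem sucN tv1 W1 (MMu X p)"
  define f1 where "f1 I = gsem sucN tv1 (W1(X:=I)) p" for I
  have mp: "mpol True X p" "mono_ok p" using MMu.prems(1) by auto
  have g0: "good0 tv1 tv2 \<tau> (mtestsl p)" using MMu.prems(2) by simp
  have tp: "\<forall>(d,\<pi>)\<in>set (mtestsl p). tv2 (\<tau> \<pi> d) \<pi> \<inter> {1..} = tv1 d \<pi> \<inter> {1..}"
    using g0 by (rule good0_loc)
  have cc0: "mfv c = mfv (mmap \<tau> (\<lambda>_. \<Gamma>) (MMu X p)) - {X. \<sigma> X \<noteq> None}"
    unfolding c_def by (rule mfv_subst[OF MMu.prems(4)])
  have cc: "mfv c = {}" using MMu.prems(3) unfolding cc0 mfv_mmap by blast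
  define W\<sigma> where "W\<sigma> = (\<lambda>X. case \<sigma> X of Some \<phi> \<Rightarrow> gsem sucN tv2 W2 \<phi> | None \<Rightarrow> W2 X)"
  have cL: "gsem sucN tv2 W2 c \<inter> {1..} = L \<inter> {1..}"
  proof -
    have "gsem sucN tv2 W2 c = gsem sucN tv2 W\<sigma> (mmap \<tau> (\<lambda>_. \<Gamma>) (MMu X p))"
      unfolding W\<sigma>_def c_def by (rule gsem_subst[OF MMu.prems(4)])
    moreover have "gsem sucN tv2 W\<sigma> (mmap \<tau> (\<lambda>_. \<Gamma>) (MMu X p)) \<inter> {1..} = L \<inter> {1..}"
      unfolding L_def
    proof (rule loc)
      show "mono_ok (MMu X p)" by (rule MMu.prems(1))
      show "\<forall>(d,\<pi>)\<in>set (mtestsl (MMu X p)). tv2 (\<tau> \<pi> d) \<pi> \<inter> {1..} = tv1 d \<pi> \<inter> {1..}"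
        using tp by simp
      show "\<forall>Y\<in>mfv (MMu X p). W\<sigma> Y \<inter> {1..} = W1 Y \<inter> {1..}"
      proof
        fix Y assume "Y \<in> mfv (MMu X p)"
        then obtain \<phi> where s: "\<sigma> Y = Some \<phi>" using MMu.prems(3) by auto
        then show "W\<sigma> Y \<inter> {1..} = W1 Y \<inter> {1..}" using MMu.prems(5) unfolding W\<sigma>_def envok_def by simp
      qed
    qed
    ultimately show ?thesis by simp
  qed
  have IH: "0 \<in> gsem sucN tv2 W2 (At \<tau> \<Gamma> \<sigma>' p) \<longleftrightarrow> 0 \<in> gsem sucN tv1 (W1(X := L - {0})) p"
  proof (rule MMu.IH)
    show "mono_ok p" by (rule mp(2))
    show "good0 tv1 tv2 \<tau> (mtestsl p)" by (rule g0)
    show "mfv p \<subseteq> {X. \<sigma>' X \<noteq> None}" using MMu.prems(3) unfolding \<sigma>'_def by auto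
    show "sclosed \<sigma>'" using MMu.prems(4) cc unfolding \<sigma>'_def sclosed_def by auto
    show "envok \<sigma>' (W1(X := L - {0})) (gsem sucN tv2 W2)"
      unfolding envok_def
    proof (intro allI impI)
      fix Y \<phi> assume s: "\<sigma>' Y = Some \<phi>"
      show "0 \<notin> (W1(X := L - {0})) Y \<and> (W1(X := L - {0})) Y \<inter> {1..} = gsem sucN tv2 W2 \<phi> \<inter> {1..}"
      proof (cases "Y = X")
        case True
        then have "\<phi> = c" using s unfolding \<sigma>'_def by simp
        moreover have "(L - {0}) \<inter> {1..} = L \<inter> {1..}" by auto
        ultimately show ?thesis using True cL by simp
      next
        case False
        then have "\<sigma> Y = Some \<phi>" using s unfolding \<sigma>'_def by simp
        then show ?thesis using False MMu.prems(5) unfolding envok_def by simp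
      qed
    qed
  qed
  have m1: "mono f1" unfolding f1_def by (rule gsem_mono[OF mp(1)])
  have L1: "L = lfp f1" unfolding L_def f1_def by (rule gsem_Mu_lfp)
  have fL: "f1 L = L" unfolding L1 by (rule lfp_unfold[OF m1, symmetric])
  have self: "f1 (L - {0}) \<inter> {1..} = f1 L \<inter> {1..}"
  proof -
    have "gsem sucN tv1 (W1(X := L - {0})) (mmap (\<lambda>\<pi> d. d) id p) \<inter> {1..} = gsem sucN tv1 (W1(X:=L)) p \<inter> {1..}"
    proof (rule loc)
      show "mono_ok p" by (rule mp(2))
      show "\<forall>(d,\<pi>)\<in>set (mtestsl p). tv1 ((\<lambda>\<pi> d. d) \<pi> d) \<pi> \<inter> {1..} = tv1 d \<pi> \<inter> {1..}" by simp
      show "\<forall>Y\<in>mfv p. (W1(X := L - {0})) Y \<inter> {1..} = (W1(X:=L)) Y \<inter> {1..}"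
      proof
        fix Y show "(W1(X := L - {0})) Y \<inter> {1..} = (W1(X:=L)) Y \<inter> {1..}"
          by (cases "Y = X") auto
      qed
    qed
    then show ?thesis unfolding f1_def mmap_id .
  qed
  have key: "0 \<in> L \<longleftrightarrow> 0 \<in> f1 (L - {0})"
  proof
    assume "0 \<in> f1 (L - {0})"
    moreover have "f1 (L - {0}) \<subseteq> f1 L" using m1 by (rule monoD) blast
    moreover note fL
    ultimately show "0 \<in> L" by blast
  next
    assume a: "0 \<in> L"
    show "0 \<in> f1 (L - {0})"
    proof (rule ccontr)
      assume n: "0 \<notin> f1 (L - {0})"
      have "f1 (L - {0}) \<subseteq> L - {0}"
      proof
        fix x assume x: "x \<in> f1 (L - {0})"
        have "x \<noteq> 0"
        proof
          assume "x = 0" with x n show False by simp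
        qed
        then have "x \<in> f1 (L - {0}) \<inter> {1..}" using x by auto
        then have "x \<in> f1 L \<inter> {1..}" by (simp only: self)
        then have "x \<in> L" using fL by simp
        then show "x \<in> L - {0}" using \<open>x \<noteq> 0\<close> by simp
      qed
      then have "lfp f1 \<subseteq> L - {0}" by (rule lfp_lowerbound)
      then show False using a L1 by auto
    qed
  qed
  have At_eq: "At \<tau> \<Gamma> \<sigma> (MMu X p) = At \<tau> \<Gamma> \<sigma>' p" unfolding \<sigma>'_def c_def by simp
  show ?case unfolding At_eq IH using key unfolding L_def f1_def by simp
qed


lemma mfv_At: "sclosed \<sigma> \<Longrightarrow> mfv \<psi> \<subseteq> {X. \<sigma> X \<noteq> None} \<Longrightarrow> mfv (At \<tau> \<Gamma> \<sigma> \<psi>) = {}"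
proof (induction \<psi> arbitrary: \<sigma>)
  case (MNext D p)
  then show ?case using mfv_subst[OF MNext.prems(1), of "mmap \<tau> (\<lambda>_. \<Gamma>) p"] by auto
next
  case (MMu X p)
  define c where "c = subst \<sigma> (mmap \<tau> (\<lambda>_. \<Gamma>) (MMu X p))"
  have cc0: "mfv c = mfv (mmap \<tau> (\<lambda>_. \<Gamma>) (MMu X p)) - {X. \<sigma> X \<noteq> None}"
    unfolding c_def by (rule mfv_subst[OF MMu.prems(1)])
  have cc: "mfv c = {}" using MMu.prems(2) unfolding cc0 mfv_mmap by blast
  have "mfv (At \<tau> \<Gamma> (\<sigma>(X := Some c)) p) = {}"
    by (rule MMu.IH) (use MMu.prems cc in \<open>auto simp: sclosed_def\<close>)
  then show ?case unfolding c_def by simp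
qed (auto simp: MFalse_def)

lemma mono_ok_At: "mono_ok \<psi> \<Longrightarrow> sclosed \<sigma> \<Longrightarrow> sprop mono_ok \<sigma> \<Longrightarrow> mfv \<psi> \<subseteq> {X. \<sigma> X \<noteq> None}
   \<Longrightarrow> mono_ok (At \<tau> \<Gamma> \<sigma> \<psi>)"
proof (induction \<psi> arbitrary: \<sigma>)
  case (MNext D p)
  then show ?case by (simp add: mono_ok_subst)
next
  case (MMu X p)
  define c where "c = subst \<sigma> (mmap \<tau> (\<lambda>_. \<Gamma>) (MMu X p))"
  have cc0: "mfv c = mfv (mmap \<tau> (\<lambda>_. \<Gamma>) (MMu X p)) - {X. \<sigma> X \<noteq> None}"
    unfolding c_def by (rule mfv_subst[OF MMu.prems(2)])
  have cc: "mfv c = {}" using MMu.prems(4) unfolding cc0 mfv_mmap by blast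
  have mc: "mono_ok c" unfolding c_def
    by (rule mono_ok_subst) (use MMu.prems in simp_all)
  have "mono_ok (At \<tau> \<Gamma> (\<sigma>(X := Some c)) p)"
    by (rule MMu.IH) (use MMu.prems cc mc in \<open>auto simp: sclosed_def sprop_def\<close>)
  then show ?case unfolding c_def by simp
qed (auto simp: MFalse_def)

lemma mwf_mmap: "mwf lok B \<psi> \<Longrightarrow> (\<forall>\<pi>\<in>B. lok' (\<Gamma> \<pi>)) \<Longrightarrow>
   (\<forall>(d,\<pi>)\<in>set (mtestsl \<psi>). tf_ok (\<tau> \<pi> d)) \<Longrightarrow> mwf lok' B (mmap \<tau> (\<lambda>_. \<Gamma>) \<psi>)"
  by (induction \<psi>) auto

lemma mwf_At: "mwf lok B \<psi> \<Longrightarrow> (\<forall>\<pi>\<in>B. lok' (\<Gamma> \<pi>)) \<Longrightarrow>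
   (\<forall>(d,\<pi>)\<in>set (mtestsl \<psi>). tf_ok (\<tau> \<pi> d)) \<Longrightarrow>
   sclosed \<sigma> \<Longrightarrow> sprop (mwf lok' B) \<sigma> \<Longrightarrow> mfv \<psi> \<subseteq> {X. \<sigma> X \<noteq> None}
   \<Longrightarrow> mwf lok' B (At \<tau> \<Gamma> \<sigma> \<psi>)"
proof (induction \<psi> arbitrary: \<sigma>)
  case (MNext D p)
  have "mwf lok' B (mmap \<tau> (\<lambda>_. \<Gamma>) p)"
    by (rule mwf_mmap) (use MNext.prems(1,2,3) in auto)
  then show ?case using MNext.prems by (simp add: mwf_subst)
next
  case (MMu X p)
  define c where "c = subst \<sigma> (mmap \<tau> (\<lambda>_. \<Gamma>) (MMu X p))"
  have cc0: "mfv c = mfv (mmap \<tau> (\<lambda>_. \<Gamma>) (MMu X p)) - {X. \<sigma> X \<noteq> None}"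
    unfolding c_def by (rule mfv_subst[OF MMu.prems(4)])
  have cc: "mfv c = {}" using MMu.prems(6) unfolding cc0 mfv_mmap by blast
  have mm: "mwf lok' B (mmap \<tau> (\<lambda>_. \<Gamma>) (MMu X p))"
    by (rule mwf_mmap) (use MMu.prems(1,2,3) in auto)
  have mc: "mwf lok' B c" unfolding c_def
    by (rule mwf_subst[OF mm]) (use MMu.prems in simp_all)
  have "mwf lok' B (At \<tau> \<Gamma> (\<sigma>(X := Some c)) p)"
    by (rule MMu.IH) (use MMu.prems cc mc in \<open>auto simp: sclosed_def sprop_def\<close>)
  then show ?case unfolding c_def by simp
qed (auto simp: MFalse_def)

lemma mnexts_At: "sprop (\<lambda>\<phi>. mnexts \<phi> \<subseteq> {\<Gamma>}) \<sigma> \<Longrightarrow> mnexts (At \<tau> \<Gamma> \<sigma> \<psi>) \<subseteq> {\<Gamma>}"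
proof (induction \<psi> arbitrary: \<sigma>)
  case (MNext D p)
  have "mnexts (subst \<sigma> (mmap \<tau> (\<lambda>_. \<Gamma>) p)) \<subseteq> {\<Gamma>}"
    by (rule mnexts_subst) (use MNext.prems in auto)
  then show ?case by simp
next
  case (MMu X p)
  define c where "c = subst \<sigma> (mmap \<tau> (\<lambda>_. \<Gamma>) (MMu X p))"
  have mc: "mnexts c \<subseteq> {\<Gamma>}" unfolding c_def
    by (rule mnexts_subst) (use MMu.prems in auto)
  have "mnexts (At \<tau> \<Gamma> (\<sigma>(X := Some c)) p) \<subseteq> {\<Gamma>}"
    by (rule MMu.IH) (use MMu.prems mc in \<open>auto simp: sprop_def\<close>)
  then show ?case unfolding c_def by simp
qed (auto simp: MFalse_def)


definition TFalse :: "'ap tf" where "TFalse = TMu 0 (TVar 0)"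
definition TTrue :: "'ap tf" where "TTrue = TNot TFalse"
definition TAnd :: "'ap tf \<Rightarrow> 'ap tf \<Rightarrow> 'ap tf" where "TAnd a b = TNot (TOr (TNot a) (TNot b))"
definition TIff :: "'ap tf \<Rightarrow> 'ap tf \<Rightarrow> 'ap tf" where "TIff a b = TOr (TAnd a b) (TAnd (TNot a) (TNot b))"
definition Until :: "'ap tf \<Rightarrow> 'ap tf \<Rightarrow> 'ap tf" where
  "Until a b = TMu 0 (TOr (TAnd a b) (TAnd (TNot a) (TNext SG (TVar 0))))"

lemma tsem_cong: "(\<forall>Y\<in>tfv d. V Y = V' Y) \<Longrightarrow> tsem tr V d = tsem tr V' d"
proof (induction d arbitrary: V V')
  case (TOr a b)
  have "tsem tr V a = tsem tr V' a" by (rule TOr.IH(1)) (use TOr.prems in simp)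
  moreover have "tsem tr V b = tsem tr V' b" by (rule TOr.IH(2)) (use TOr.prems in simp)
  ultimately show ?case by simp
next
  case (TNot a)
  have "tsem tr V a = tsem tr V' a" by (rule TNot.IH) (use TNot.prems in simp)
  then show ?case by simp
next
  case (TNext f a)
  have "tsem tr V a = tsem tr V' a" by (rule TNext.IH) (use TNext.prems in simp)
  then show ?case by simp
next
  case (TMu Y a)
  have "tsem tr (V(Y:=I)) a = tsem tr (V'(Y:=I)) a" for I
    by (rule TMu.IH) (use TMu.prems in simp)
  then show ?case by simp
qed auto

lemma tsem_closed: "tfv d = {} \<Longrightarrow> tsem tr V d = tsem tr V' d"
  by (rule tsem_cong) simp

lemma tpol_closed: "Y \<notin> tfv d \<Longrightarrow> tpol p Y d"
  by (induction d arbitrary: p) auto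

lemma tfv_simps[simp]:
  "tfv (TFalse :: 'ap tf) = {}" "tfv (TTrue :: 'ap tf) = {}"
  "tfv (TAnd a b) = tfv a \<union> tfv b" "tfv (TIff a b) = tfv a \<union> tfv b"
  "tfv (Until a b) = (tfv a \<union> tfv b) - {0}"
  by (auto simp: TFalse_def TTrue_def TAnd_def TIff_def Until_def)

lemma twf_simps[simp]:
  "twf (TFalse :: 'ap tf)" "twf (TTrue :: 'ap tf)"
  "twf (TAnd a b) = (twf a \<and> twf b)" "twf (TIff a b) = (twf a \<and> twf b)"
  by (auto simp: TFalse_def TTrue_def TAnd_def TIff_def)

lemma twf_Until: "twf a \<Longrightarrow> twf b \<Longrightarrow> 0 \<notin> tfv a \<Longrightarrow> 0 \<notin> tfv b \<Longrightarrow> twf (Until a b)"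
  by (auto simp: Until_def TAnd_def tpol_closed)

lemma tpol_Until: "Y \<noteq> 0 \<Longrightarrow> Y \<notin> tfv a \<Longrightarrow> tpol p Y b \<Longrightarrow> tpol p Y (Until a b)"
  by (auto simp: Until_def TAnd_def tpol_closed)

lemma tpol_TAnd: "tpol p Y (TAnd a b) = (tpol p Y a \<and> tpol p Y b)"
  by (simp add: TAnd_def)

lemma tsem_TFalse[simp]: "tsem tr V TFalse = {}"
  by (auto simp: TFalse_def)

lemma tsem_TTrue[simp]: "tsem tr V TTrue = UNIV"
  by (simp add: TTrue_def)

lemma tsem_TAnd[simp]: "tsem tr V (TAnd a b) = tsem tr V a \<inter> tsem tr V b"
  by (auto simp: TAnd_def)

lemma tsem_TIff[simp]: "tsem tr V (TIff a b) = {k. k \<in> tsem tr V a \<longleftrightarrow> k \<in> tsem tr V b}"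
  by (auto simp: TIff_def)

lemma tsem_TNext_SG[simp]: "tsem tr V (TNext SG a) = {i. Suc i \<in> tsem tr V a}"
  by auto

lemma until_pre:
  assumes "(A \<inter> B) \<union> (- A \<inter> {i. Suc i \<in> I}) \<subseteq> I" "j \<in> A" "j \<in> B" "\<forall>l. k \<le> l \<and> l < j \<longrightarrow> l \<notin> A" "k \<le> j"
  shows "k \<in> I"
  using assms
proof (induction "j - k" arbitrary: k)
  case 0
  then have "k = j" by simp
  then show ?case using 0 by blast
next
  case (Suc n)
  then have "k < j" by simp
  then have "k \<notin> A" using Suc.prems(4) by simp
  have "Suc k \<in> I" by (rule Suc.hyps) (use Suc in auto)
  then show ?case using \<open>k \<notin> A\<close> Suc.prems(1) by blast
qed

lemma until_lfp:
  "\<Inter>{I. (A \<inter> B) \<union> (- A \<inter> {i. Suc i \<in> I}) \<subseteq> I} =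
    {k. \<exists>j\<ge>k. j \<in> A \<and> j \<in> B \<and> (\<forall>l. k \<le> l \<and> l < j \<longrightarrow> l \<notin> A)}"
  (is "\<Inter>{I. ?f I \<subseteq> I} = ?S")
proof
  have "?f ?S \<subseteq> ?S"
  proof
    fix k assume k: "k \<in> ?f ?S"
    show "k \<in> ?S"
    proof (cases "k \<in> A")
      case True
      then show ?thesis using k by auto
    next
      case False
      then have "Suc k \<in> ?S" using k by auto
      then obtain j where j: "j \<ge> Suc k" "j \<in> A" "j \<in> B" "\<forall>l. Suc k \<le> l \<and> l < j \<longrightarrow> l \<notin> A" by auto
      have "\<forall>l. k \<le> l \<and> l < j \<longrightarrow> l \<notin> A"
      proof (intro allI impI)
        fix l assume "k \<le> l \<and> l < j"
        then show "l \<notin> A" using j(4) False by (cases "l = k") auto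
      qed
      moreover have "j \<ge> k" using j(1) by simp
      ultimately show ?thesis using j(2,3) by blast
    qed
  qed
  then show "\<Inter>{I. ?f I \<subseteq> I} \<subseteq> ?S" by blast
next
  show "?S \<subseteq> \<Inter>{I. ?f I \<subseteq> I}"
  proof
    fix k assume "k \<in> ?S"
    then obtain j where j: "j \<ge> k" "j \<in> A" "j \<in> B" "\<forall>l. k \<le> l \<and> l < j \<longrightarrow> l \<notin> A" by auto
    show "k \<in> \<Inter>{I. ?f I \<subseteq> I}"
    proof
      fix I assume "I \<in> {I. ?f I \<subseteq> I}"
      then show "k \<in> I" using until_pre[of A B I j k] j by auto
    qed
  qed
qed

lemma tsem_Until:
  assumes "0 \<notin> tfv a" "0 \<notin> tfv b"
  shows "tsem tr V (Until a b) = {k. \<exists>j\<ge>k. j \<in> tsem tr V a \<and> j \<in> tsem tr V b \<and>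
            (\<forall>l. k \<le> l \<and> l < j \<longrightarrow> l \<notin> tsem tr V a)}"
proof -
  have a: "tsem tr (V(0:=I)) a = tsem tr V a" for I by (rule tsem_cong) (use assms in auto)
  have b: "tsem tr (V(0:=I)) b = tsem tr V b" for I by (rule tsem_cong) (use assms in auto)
  have "tsem tr V (Until a b) = \<Inter>{I. (tsem tr V a \<inter> tsem tr V b) \<union> (- tsem tr V a \<inter> {i. Suc i \<in> I}) \<subseteq> I}"
    unfolding Until_def by (simp add: a b)
  then show ?thesis by (simp only: until_lfp)
qed


definition Ds :: "'ap tf \<Rightarrow> 'ap tf" where "Ds \<delta> = TOr \<delta> (TNot (TNext SG (Until \<delta> TTrue)))"
definition NX :: "'ap tf \<Rightarrow> 'ap tf \<Rightarrow> 'ap tf" where "NX \<delta> \<phi> = TNext SG (Until (Ds \<delta>) \<phi>)"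
definition Same :: "'ap tf \<Rightarrow> 'ap tf list \<Rightarrow> 'ap tf" where
  "Same \<delta> ts = foldr (\<lambda>\<theta> acc. TAnd (TIff \<theta> (NX \<delta> \<theta>)) acc) ts TTrue"
definition Od :: "'ap tf \<Rightarrow> 'ap tf list \<Rightarrow> 'ap tf" where
  "Od \<delta> ts = TMu 1 (TOr (TNot (Same \<delta> ts)) (TAnd (Same \<delta> ts) (NX \<delta> (TAnd (Same \<delta> ts) (NX \<delta> (TVar 1))))))"
definition gam :: "'ap tf \<Rightarrow> 'ap tf list \<Rightarrow> 'ap tf list" where
  "gam \<delta> ts = NX \<delta> (Od \<delta> ts) # map (NX \<delta>) ts"

definition DS :: "'ap trace \<Rightarrow> 'ap tf \<Rightarrow> nat set" where "DS tr \<delta> = tsem tr (\<lambda>_. {}) (Ds \<delta>)"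
definition nxt :: "'ap trace \<Rightarrow> 'ap tf \<Rightarrow> nat \<Rightarrow> nat" where
  "nxt tr \<delta> k = (LEAST j. k < j \<and> j \<in> DS tr \<delta>)"

lemma tfv_Ds[simp]: "tfv (Ds \<delta>) = tfv \<delta>"
  by (auto simp: Ds_def)

lemma tfv_NX[simp]: "tfv (NX \<delta> \<phi>) = (tfv \<delta> \<union> tfv \<phi>) - {0}"
  by (auto simp: NX_def)

lemma tfv_Same[simp]: "\<forall>\<theta>\<in>set ts. tfv \<theta> = {} \<Longrightarrow> tfv \<delta> = {} \<Longrightarrow> tfv (Same \<delta> ts) = {}"
  unfolding Same_def by (induction ts) auto

lemma tfv_Od[simp]: "\<forall>\<theta>\<in>set ts. tfv \<theta> = {} \<Longrightarrow> tfv \<delta> = {} \<Longrightarrow> tfv (Od \<delta> ts) = {}"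
  unfolding Od_def by auto

lemma twf_Ds: "twf \<delta> \<Longrightarrow> tfv \<delta> = {} \<Longrightarrow> twf (Ds \<delta>)"
  unfolding Ds_def by (auto intro: twf_Until)

lemma twf_NX: "twf \<delta> \<Longrightarrow> tfv \<delta> = {} \<Longrightarrow> twf \<phi> \<Longrightarrow> 0 \<notin> tfv \<phi> \<Longrightarrow> twf (NX \<delta> \<phi>)"
  unfolding NX_def by (auto intro!: twf_Until twf_Ds)

lemma twf_Same: "\<forall>\<theta>\<in>set ts. tf_ok \<theta> \<Longrightarrow> tf_ok \<delta> \<Longrightarrow> twf (Same \<delta> ts)"
  unfolding Same_def tf_ok_def by (induction ts) (auto intro!: twf_NX)

lemma tpol_NX: "Y \<noteq> 0 \<Longrightarrow> tfv \<delta> = {} \<Longrightarrow> tpol p Y \<phi> \<Longrightarrow> tpol p Y (NX \<delta> \<phi>)"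
  unfolding NX_def by (auto intro!: tpol_Until)

lemma tf_ok_Od: "\<forall>\<theta>\<in>set ts. tf_ok \<theta> \<Longrightarrow> tf_ok \<delta> \<Longrightarrow> tf_ok (Od \<delta> ts)"
proof -
  assume a: "\<forall>\<theta>\<in>set ts. tf_ok \<theta>" "tf_ok \<delta>"
  then have c: "\<forall>\<theta>\<in>set ts. tfv \<theta> = {}" "tfv \<delta> = {}" "twf \<delta>" unfolding tf_ok_def by auto
  have s: "twf (Same \<delta> ts)" "tfv (Same \<delta> ts) = {}" using twf_Same[OF a] c by auto
  have p: "tpol q Y (Same \<delta> ts)" for q Y by (rule tpol_closed) (simp add: s)
  have tw: "twf (TAnd (Same \<delta> ts) (NX \<delta> (TVar 1)))"
    using s c by (auto intro!: twf_NX)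
  have tp: "tpol True 1 (TAnd (Same \<delta> ts) (NX \<delta> (TVar 1)))"
    using c by (auto simp: tpol_TAnd p intro!: tpol_NX)
  have "twf (Od \<delta> ts)" unfolding Od_def
    using s c tw tp by (auto simp: tpol_TAnd p intro!: twf_NX tpol_NX)
  then show ?thesis unfolding tf_ok_def using c by simp
qed

lemma tf_ok_NX: "tf_ok \<delta> \<Longrightarrow> tf_ok \<phi> \<Longrightarrow> tf_ok (NX \<delta> \<phi>)"
  unfolding tf_ok_def by (auto intro!: twf_NX)

lemma tf_ok_U: "tf_ok \<delta> \<Longrightarrow> tf_ok \<phi> \<Longrightarrow> tf_ok (Until (Ds \<delta>) \<phi>)"
  unfolding tf_ok_def by (auto intro!: twf_Until twf_Ds)

lemma tf_ok_gam: "\<forall>\<theta>\<in>set ts. tf_ok \<theta> \<Longrightarrow> tf_ok \<delta> \<Longrightarrow> \<forall>d\<in>set (gam \<delta> ts). tf_ok d"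
  unfolding gam_def by (auto intro!: tf_ok_NX tf_ok_Od)

lemma ex_first: "(\<exists>j\<ge>k. j \<in> A \<and> (\<forall>l. k \<le> l \<and> l < j \<longrightarrow> l \<notin> A)) \<longleftrightarrow> (\<exists>j\<ge>k. j \<in> (A::nat set))"
proof
  assume "\<exists>j\<ge>k. j \<in> A"
  then have ex: "\<exists>j. k \<le> j \<and> j \<in> A" by auto
  define j0 where "j0 = (LEAST j. k \<le> j \<and> j \<in> A)"
  have "k \<le> j0 \<and> j0 \<in> A" unfolding j0_def by (rule LeastI_ex[OF ex])
  moreover have "\<forall>l. k \<le> l \<and> l < j0 \<longrightarrow> l \<notin> A" unfolding j0_def using not_less_Least by blast
  ultimately show "\<exists>j\<ge>k. j \<in> A \<and> (\<forall>l. k \<le> l \<and> l < j \<longrightarrow> l \<notin> A)" by blast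
qed blast

lemma tsem_Ds:
  assumes "tfv \<delta> = {}"
  shows "tsem tr V (Ds \<delta>) = {k. k \<in> tsem tr V \<delta> \<or> \<not> (\<exists>j>k. j \<in> tsem tr V \<delta>)}"
proof -
  have "tsem tr V (Until \<delta> TTrue) = {k. \<exists>j\<ge>k. j \<in> tsem tr V \<delta>}"
    using assms by (simp add: tsem_Until ex_first)
  then show ?thesis unfolding Ds_def by (auto simp: Suc_le_eq)
qed

lemma DS_char: "tfv \<delta> = {} \<Longrightarrow> DS tr \<delta> = {k. k \<in> tsem tr (\<lambda>_. {}) \<delta> \<or> \<not> (\<exists>j>k. j \<in> tsem tr (\<lambda>_. {}) \<delta>)}"
  unfolding DS_def by (rule tsem_Ds)

lemma DS_unb: "tfv \<delta> = {} \<Longrightarrow> \<exists>j>k. j \<in> DS tr \<delta>"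
proof -
  assume c: "tfv \<delta> = {}"
  show ?thesis
  proof (cases "\<exists>j>k. j \<in> tsem tr (\<lambda>_. {}) \<delta>")
    case True
    then show ?thesis using DS_char[OF c] by auto
  next
    case False
    then have "Suc k \<in> DS tr \<delta>" using DS_char[OF c] by auto
    then show ?thesis by auto
  qed
qed

lemma nxt_props:
  assumes "tfv \<delta> = {}"
  shows "k < nxt tr \<delta> k" "nxt tr \<delta> k \<in> DS tr \<delta>"
    "k < l \<Longrightarrow> l < nxt tr \<delta> k \<Longrightarrow> l \<notin> DS tr \<delta>"
    "k < j \<Longrightarrow> j \<in> DS tr \<delta> \<Longrightarrow> nxt tr \<delta> k \<le> j"
proof -
  have ex: "\<exists>j. k < j \<and> j \<in> DS tr \<delta>" using DS_unb[OF assms] by auto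
  have a: "k < nxt tr \<delta> k \<and> nxt tr \<delta> k \<in> DS tr \<delta>" unfolding nxt_def by (rule LeastI_ex[OF ex])
  then show "k < nxt tr \<delta> k" "nxt tr \<delta> k \<in> DS tr \<delta>" by auto
  show "k < l \<Longrightarrow> l < nxt tr \<delta> k \<Longrightarrow> l \<notin> DS tr \<delta>" unfolding nxt_def using not_less_Least by blast
  show "k < j \<Longrightarrow> j \<in> DS tr \<delta> \<Longrightarrow> nxt tr \<delta> k \<le> j" unfolding nxt_def by (rule Least_le) simp
qed

lemma nxt_same:
  assumes "tfv \<delta> = {}" "x < y" "y < nxt tr \<delta> x"
  shows "nxt tr \<delta> y = nxt tr \<delta> x"
proof (rule antisym)
  show "nxt tr \<delta> y \<le> nxt tr \<delta> x" using nxt_props[OF assms(1)] assms(3) by blast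
  show "nxt tr \<delta> x \<le> nxt tr \<delta> y"
  proof (rule ccontr)
    assume "\<not> nxt tr \<delta> x \<le> nxt tr \<delta> y"
    then have "nxt tr \<delta> y < nxt tr \<delta> x" by simp
    moreover have "x < nxt tr \<delta> y" using nxt_props(1)[OF assms(1), where k=y and tr=tr] assms(2) by (meson less_trans)
    ultimately show False using nxt_props[OF assms(1)] by blast
  qed
qed

lemma succ_mumble_nxt:
  assumes "tfv \<delta> = {}"
  shows "succ_mumble tr \<delta> k = nxt tr \<delta> k"
proof (cases "\<exists>j>k. j \<in> tsem tr (\<lambda>_. {}) \<delta>")
  case True
  define j0 where "j0 = (LEAST j. k < j \<and> j \<in> tsem tr (\<lambda>_. {}) \<delta>)"
  have ex: "\<exists>j. k < j \<and> j \<in> tsem tr (\<lambda>_. {}) \<delta>" using True by auto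
  have j0: "k < j0" "j0 \<in> tsem tr (\<lambda>_. {}) \<delta>" unfolding j0_def using LeastI_ex[OF ex] by auto
  have j0m: "y \<notin> tsem tr (\<lambda>_. {}) \<delta>" if "k < y" "y < j0" for y
    using not_less_Least[of y "\<lambda>j. k < j \<and> j \<in> tsem tr (\<lambda>_. {}) \<delta>"] that unfolding j0_def by blast
  have "nxt tr \<delta> k = j0" unfolding nxt_def
  proof (rule Least_equality)
    show "k < j0 \<and> j0 \<in> DS tr \<delta>" using j0 DS_char[OF assms] by auto
    fix y assume y: "k < y \<and> y \<in> DS tr \<delta>"
    show "j0 \<le> y"
    proof (rule ccontr)
      assume "\<not> j0 \<le> y"
      then have "y < j0" by simp
      then have "y \<notin> tsem tr (\<lambda>_. {}) \<delta>" using j0m y by auto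
      moreover have "\<exists>j>y. j \<in> tsem tr (\<lambda>_. {}) \<delta>" using j0 \<open>y < j0\<close> by auto
      ultimately show False using y DS_char[OF assms] by auto
    qed
  qed
  then show ?thesis unfolding succ_mumble_def j0_def using True by simp
next
  case False
  have "nxt tr \<delta> k = Suc k" unfolding nxt_def
  proof (rule Least_equality)
    show "k < Suc k \<and> Suc k \<in> DS tr \<delta>" using False DS_char[OF assms] by auto
  qed simp
  moreover have "succ_mumble tr \<delta> k = Suc k" unfolding succ_mumble_def by (rule if_not_P[OF False])
  ultimately show ?thesis by simp
qed

lemma tsem_NX:
  assumes "tfv \<delta> = {}" "0 \<notin> tfv \<phi>"
  shows "tsem tr V (NX \<delta> \<phi>) = {k. nxt tr \<delta> k \<in> tsem tr V \<phi>}"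
proof -
  have D: "tsem tr V (Ds \<delta>) = DS tr \<delta>" unfolding DS_def by (rule tsem_closed) (simp add: assms)
  have "Suc k \<in> tsem tr V (Until (Ds \<delta>) \<phi>) \<longleftrightarrow> nxt tr \<delta> k \<in> tsem tr V \<phi>" for k
  proof -
    have "Suc k \<in> tsem tr V (Until (Ds \<delta>) \<phi>) \<longleftrightarrow>
      (\<exists>j\<ge>Suc k. j \<in> DS tr \<delta> \<and> j \<in> tsem tr V \<phi> \<and> (\<forall>l. Suc k \<le> l \<and> l < j \<longrightarrow> l \<notin> DS tr \<delta>))"
      using assms by (simp add: tsem_Until D)
    also have "\<dots> \<longleftrightarrow> nxt tr \<delta> k \<in> tsem tr V \<phi>"
    proof
      assume "\<exists>j\<ge>Suc k. j \<in> DS tr \<delta> \<and> j \<in> tsem tr V \<phi> \<and> (\<forall>l. Suc k \<le> l \<and> l < j \<longrightarrow> l \<notin> DS tr \<delta>)"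
      then obtain j where j: "j \<ge> Suc k" "j \<in> DS tr \<delta>" "j \<in> tsem tr V \<phi>" "\<forall>l. Suc k \<le> l \<and> l < j \<longrightarrow> l \<notin> DS tr \<delta>"
        by blast
      have "nxt tr \<delta> k \<le> j" using nxt_props(4)[OF assms(1)] j by simp
      moreover have "\<not> nxt tr \<delta> k < j" using j(4) nxt_props(1,2)[OF assms(1), where k=k and tr=tr] by (auto simp: Suc_le_eq)
      ultimately have "nxt tr \<delta> k = j" by simp
      then show "nxt tr \<delta> k \<in> tsem tr V \<phi>" using j by simp
    next
      assume "nxt tr \<delta> k \<in> tsem tr V \<phi>"
      moreover have "\<forall>l. Suc k \<le> l \<and> l < nxt tr \<delta> k \<longrightarrow> l \<notin> DS tr \<delta>"
        using nxt_props(3)[OF assms(1)] by (auto simp: Suc_le_eq)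
      ultimately show "\<exists>j\<ge>Suc k. j \<in> DS tr \<delta> \<and> j \<in> tsem tr V \<phi> \<and> (\<forall>l. Suc k \<le> l \<and> l < j \<longrightarrow> l \<notin> DS tr \<delta>)"
        using nxt_props(1,2)[OF assms(1), where k=k and tr=tr] by (auto simp: Suc_le_eq)
    qed
    finally show ?thesis .
  qed
  then show ?thesis unfolding NX_def by simp
qed

lemma tsem_U:
  assumes "tfv \<delta> = {}" "tfv \<theta> = {}"
  shows "k \<in> tsem tr V (Until (Ds \<delta>) \<theta>) \<longleftrightarrow>
    (\<exists>j\<ge>k. j \<in> DS tr \<delta> \<and> j \<in> tsem tr (\<lambda>_. {}) \<theta> \<and> (\<forall>l. k \<le> l \<and> l < j \<longrightarrow> l \<notin> DS tr \<delta>))"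
proof -
  have D: "tsem tr V (Ds \<delta>) = DS tr \<delta>" unfolding DS_def by (rule tsem_closed) (simp add: assms)
  have T: "tsem tr V \<theta> = tsem tr (\<lambda>_. {}) \<theta>" by (rule tsem_closed) (simp add: assms)
  show ?thesis using assms by (simp add: tsem_Until D T)
qed

lemma tsem_Same:
  assumes "tfv \<delta> = {}" "\<forall>\<theta>\<in>set ts. tfv \<theta> = {}"
  shows "tsem tr V (Same \<delta> ts) = {k. \<forall>\<theta>\<in>set ts. (k \<in> tsem tr (\<lambda>_. {}) \<theta> \<longleftrightarrow> nxt tr \<delta> k \<in> tsem tr (\<lambda>_. {}) \<theta>)}"
  using assms(2)
proof (induction ts)
  case Nil
  then show ?case by (simp add: Same_def)
next
  case (Cons \<theta> ts)
  have T: "tsem tr V \<theta> = tsem tr (\<lambda>_. {}) \<theta>" by (rule tsem_closed) (use Cons.prems in simp)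
  have "tsem tr V (Same \<delta> (\<theta> # ts)) = tsem tr V (TIff \<theta> (NX \<delta> \<theta>)) \<inter> tsem tr V (Same \<delta> ts)"
    by (simp add: Same_def)
  also have "tsem tr V (TIff \<theta> (NX \<delta> \<theta>)) = {k. k \<in> tsem tr (\<lambda>_. {}) \<theta> \<longleftrightarrow> nxt tr \<delta> k \<in> tsem tr (\<lambda>_. {}) \<theta>}"
    using Cons.prems assms(1) by (simp add: tsem_NX T)
  finally show ?case using Cons by auto
qed

definition odd_f :: "nat set \<Rightarrow> (nat \<Rightarrow> nat) \<Rightarrow> nat set \<Rightarrow> nat set" where
  "odd_f S nx I = - S \<union> (S \<inter> {k. nx k \<in> S \<and> nx (nx k) \<in> I})"

lemma mono_odd_f: "mono (odd_f S nx)"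
  unfolding odd_f_def by (rule monoI) auto

lemma tsem_Od:
  assumes "tfv \<delta> = {}" "\<forall>\<theta>\<in>set ts. tfv \<theta> = {}"
  shows "tsem tr V (Od \<delta> ts) = lfp (odd_f (tsem tr (\<lambda>_. {}) (Same \<delta> ts)) (nxt tr \<delta>))"
proof -
  define S where "S = tsem tr (\<lambda>_. {}) (Same \<delta> ts)"
  have fv: "tfv (Same \<delta> ts) = {}" using assms by simp
  have b: "tsem tr (V(1:=I)) (TOr (TNot (Same \<delta> ts)) (TAnd (Same \<delta> ts) (NX \<delta> (TAnd (Same \<delta> ts) (NX \<delta> (TVar 1))))))
     = odd_f S (nxt tr \<delta>) I" for I
  proof -
    have S1: "tsem tr (V(1:=I)) (Same \<delta> ts) = S" unfolding S_def by (rule tsem_closed[OF fv])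
    have i1: "tsem tr (V(1:=I)) (NX \<delta> (TVar 1)) = {k. nxt tr \<delta> k \<in> I}"
      using assms(1) by (simp add: tsem_NX)
    have i2: "tsem tr (V(1:=I)) (NX \<delta> (TAnd (Same \<delta> ts) (NX \<delta> (TVar 1)))) =
        {k. nxt tr \<delta> k \<in> S \<and> nxt tr \<delta> (nxt tr \<delta> k) \<in> I}"
    proof -
      have "0 \<notin> tfv (TAnd (Same \<delta> ts) (NX \<delta> (TVar 1)))" using fv by simp
      then have "tsem tr (V(1:=I)) (NX \<delta> (TAnd (Same \<delta> ts) (NX \<delta> (TVar 1)))) =
        {k. nxt tr \<delta> k \<in> tsem tr (V(1:=I)) (TAnd (Same \<delta> ts) (NX \<delta> (TVar 1)))}"
        by (rule tsem_NX[OF assms(1)])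
      also have "\<dots> = {k. nxt tr \<delta> k \<in> S \<and> nxt tr \<delta> (nxt tr \<delta> k) \<in> I}"
        by (simp only: tsem_TAnd S1 i1) simp
      finally show ?thesis .
    qed
    show ?thesis unfolding odd_f_def by (simp only: tsem.simps S1 i2 tsem_TAnd)
  qed
  have "tsem tr V (Od \<delta> ts) = \<Inter>{I. odd_f S (nxt tr \<delta>) I \<subseteq> I}"
    unfolding Od_def by (simp only: tsem.simps(6) b)
  then show ?thesis unfolding S_def lfp_def Inf_set_def by simp
qed


context
  fixes tr :: "'ap trace" and \<delta> :: "'ap tf" and ts :: "'ap tf list"
  assumes okd: "tf_ok \<delta>" and okt: "\<forall>\<theta>\<in>set ts. tf_ok \<theta>"
begin

lemma cl: "tfv \<delta> = {}" "\<forall>\<theta>\<in>set ts. tfv \<theta> = {}"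
  using okd okt unfolding tf_ok_def by auto

definition mm :: "nat \<Rightarrow> nat" where "mm n = (succ_mumble tr \<delta> ^^ n) 0"
definition ss :: "nat \<Rightarrow> nat" where "ss n = (succ_stutter tr (gam \<delta> ts) ^^ n) 0"
definition SSet :: "nat set" where "SSet = tsem tr (\<lambda>_. {}) (Same \<delta> ts)"
definition ODD :: "nat set" where "ODD = tsem tr (\<lambda>_. {}) (Od \<delta> ts)"
definition EqW :: "nat \<Rightarrow> bool" where
  "EqW k \<longleftrightarrow> (\<forall>\<theta>\<in>set ts. mm k \<in> tsem tr (\<lambda>_. {}) \<theta> \<longleftrightarrow> mm (Suc k) \<in> tsem tr (\<lambda>_. {}) \<theta>)"

lemma mm_0: "mm 0 = 0" by (simp add: mm_def)
lemma mm_Suc: "mm (Suc n) = nxt tr \<delta> (mm n)"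
  by (simp add: mm_def succ_mumble_nxt[OF cl(1)])
lemma ss_0: "ss 0 = 0" by (simp add: ss_def)
lemma ss_Suc: "ss (Suc n) = succ_stutter tr (gam \<delta> ts) (ss n)"
  by (simp add: ss_def)

lemma mm_less: "mm n < mm (Suc n)"
  unfolding mm_Suc by (rule nxt_props(1)[OF cl(1)])

lemma mm_ge: "i \<le> mm i"
proof (induction i)
  case (Suc i)
  then show ?case using mm_less[of i] by simp
qed simp

lemma mm_DS: "mm (Suc n) \<in> DS tr \<delta>"
  unfolding mm_Suc by (rule nxt_props(2)[OF cl(1)])

lemma SSet_char: "x \<in> SSet \<longleftrightarrow> (\<forall>\<theta>\<in>set ts. x \<in> tsem tr (\<lambda>_. {}) \<theta> \<longleftrightarrow> nxt tr \<delta> x \<in> tsem tr (\<lambda>_. {}) \<theta>)"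
  unfolding SSet_def using tsem_Same[OF cl] by blast

lemma EqW_SSet: "EqW k \<longleftrightarrow> mm k \<in> SSet"
  unfolding EqW_def SSet_char mm_Suc ..

lemma ODD_unfold: "x \<in> ODD \<longleftrightarrow> x \<notin> SSet \<or> (x \<in> SSet \<and> nxt tr \<delta> x \<in> SSet \<and> nxt tr \<delta> (nxt tr \<delta> x) \<in> ODD)"
proof -
  have "ODD = lfp (odd_f SSet (nxt tr \<delta>))" unfolding ODD_def SSet_def by (rule tsem_Od[OF cl])
  then have "ODD = odd_f SSet (nxt tr \<delta>) ODD" using lfp_unfold[OF mono_odd_f] by simp
  then show ?thesis unfolding odd_f_def by blast
qed

lemma tsem_gam: "d \<in> set (gam \<delta> ts) \<Longrightarrow>
  \<exists>e. tfv e = {} \<and> tsem tr (\<lambda>_. {}) d = {k. nxt tr \<delta> k \<in> tsem tr (\<lambda>_. {}) e}"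
proof -
  assume "d \<in> set (gam \<delta> ts)"
  then have "d = NX \<delta> (Od \<delta> ts) \<or> (\<exists>\<theta>\<in>set ts. d = NX \<delta> \<theta>)" unfolding gam_def by auto
  then show ?thesis
  proof
    assume d: "d = NX \<delta> (Od \<delta> ts)"
    have "tfv (Od \<delta> ts) = {}" using cl by simp
    then show ?thesis unfolding d using tsem_NX[OF cl(1)] by auto
  next
    assume "\<exists>\<theta>\<in>set ts. d = NX \<delta> \<theta>"
    then obtain \<theta> where t: "\<theta> \<in> set ts" "d = NX \<delta> \<theta>" by auto
    have "tfv \<theta> = {}" using cl t by auto
    then show ?thesis unfolding t using tsem_NX[OF cl(1)] by auto
  qed
qed

lemma gam_eq: "d \<in> set (gam \<delta> ts) \<Longrightarrow> nxt tr \<delta> x = nxt tr \<delta> y \<Longrightarrow>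
   (x \<in> tsem tr (\<lambda>_. {}) d \<longleftrightarrow> y \<in> tsem tr (\<lambda>_. {}) d)"
  using tsem_gam by force

lemma gam_diff:
  assumes "\<forall>d\<in>set (gam \<delta> ts). (x \<in> tsem tr (\<lambda>_. {}) d \<longleftrightarrow> nxt tr \<delta> x \<in> tsem tr (\<lambda>_. {}) d)"
  shows "(nxt tr \<delta> x \<in> ODD \<longleftrightarrow> nxt tr \<delta> (nxt tr \<delta> x) \<in> ODD)"
    "\<forall>\<theta>\<in>set ts. (nxt tr \<delta> x \<in> tsem tr (\<lambda>_. {}) \<theta> \<longleftrightarrow> nxt tr \<delta> (nxt tr \<delta> x) \<in> tsem tr (\<lambda>_. {}) \<theta>)"
proof -
  have "NX \<delta> (Od \<delta> ts) \<in> set (gam \<delta> ts)" unfolding gam_def by simp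
  then have "x \<in> tsem tr (\<lambda>_. {}) (NX \<delta> (Od \<delta> ts)) \<longleftrightarrow> nxt tr \<delta> x \<in> tsem tr (\<lambda>_. {}) (NX \<delta> (Od \<delta> ts))"
    using assms by blast
  moreover have "tsem tr (\<lambda>_. {}) (NX \<delta> (Od \<delta> ts)) = {k. nxt tr \<delta> k \<in> ODD}"
    unfolding ODD_def using cl by (simp add: tsem_NX)
  ultimately show "(nxt tr \<delta> x \<in> ODD \<longleftrightarrow> nxt tr \<delta> (nxt tr \<delta> x) \<in> ODD)" by simp
  show "\<forall>\<theta>\<in>set ts. (nxt tr \<delta> x \<in> tsem tr (\<lambda>_. {}) \<theta> \<longleftrightarrow> nxt tr \<delta> (nxt tr \<delta> x) \<in> tsem tr (\<lambda>_. {}) \<theta>)"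
  proof
    fix \<theta> assume t: "\<theta> \<in> set ts"
    then have "NX \<delta> \<theta> \<in> set (gam \<delta> ts)" unfolding gam_def by simp
    then have "x \<in> tsem tr (\<lambda>_. {}) (NX \<delta> \<theta>) \<longleftrightarrow> nxt tr \<delta> x \<in> tsem tr (\<lambda>_. {}) (NX \<delta> \<theta>)"
      using assms by blast
    moreover have "tfv \<theta> = {}" using cl t by auto
    ultimately show "nxt tr \<delta> x \<in> tsem tr (\<lambda>_. {}) \<theta> \<longleftrightarrow> nxt tr \<delta> (nxt tr \<delta> x) \<in> tsem tr (\<lambda>_. {}) \<theta>"
      using cl by (simp add: tsem_NX)
  qed
qed

lemma stut_gt: "x < succ_stutter tr g x"
proof (cases "\<exists>j>x. \<exists>d\<in>set g. (x \<in> tsem tr (\<lambda>_. {}) d) \<noteq> (j \<in> tsem tr (\<lambda>_. {}) d)")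
  case True
  then have ex: "\<exists>j. x < j \<and> (\<exists>d\<in>set g. (x \<in> tsem tr (\<lambda>_. {}) d) \<noteq> (j \<in> tsem tr (\<lambda>_. {}) d))" by auto
  show ?thesis unfolding succ_stutter_def using True LeastI_ex[OF ex] by simp
next
  case False
  have "succ_stutter tr g x = Suc x" unfolding succ_stutter_def by (rule if_not_P[OF False])
  then show ?thesis by simp
qed

lemma stut_nxt:
  assumes "\<exists>d\<in>set (gam \<delta> ts). (x \<in> tsem tr (\<lambda>_. {}) d) \<noteq> (nxt tr \<delta> x \<in> tsem tr (\<lambda>_. {}) d)"
  shows "succ_stutter tr (gam \<delta> ts) x = nxt tr \<delta> x"
proof -
  have gt: "x < nxt tr \<delta> x" by (rule nxt_props(1)[OF cl(1)])
  then have c: "\<exists>j>x. \<exists>d\<in>set (gam \<delta> ts). (x \<in> tsem tr (\<lambda>_. {}) d) \<noteq> (j \<in> tsem tr (\<lambda>_. {}) d)"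
    using assms by blast
  have "(LEAST j. x < j \<and> (\<exists>d\<in>set (gam \<delta> ts). (x \<in> tsem tr (\<lambda>_. {}) d) \<noteq> (j \<in> tsem tr (\<lambda>_. {}) d))) = nxt tr \<delta> x"
  proof (rule Least_equality)
    show "x < nxt tr \<delta> x \<and> (\<exists>d\<in>set (gam \<delta> ts). (x \<in> tsem tr (\<lambda>_. {}) d) \<noteq> (nxt tr \<delta> x \<in> tsem tr (\<lambda>_. {}) d))"
      using gt assms by blast
    fix y assume y: "x < y \<and> (\<exists>d\<in>set (gam \<delta> ts). (x \<in> tsem tr (\<lambda>_. {}) d) \<noteq> (y \<in> tsem tr (\<lambda>_. {}) d))"
    show "nxt tr \<delta> x \<le> y"
    proof (rule ccontr)
      assume "\<not> nxt tr \<delta> x \<le> y"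
      then have "nxt tr \<delta> y = nxt tr \<delta> x" using nxt_same[OF cl(1)] y by simp
      then show False using y gam_eq by blast
    qed
  qed
  then show ?thesis unfolding succ_stutter_def using c by simp
qed

lemma run_odd:
  assumes "\<forall>k. n \<le> k \<and> k < e \<longrightarrow> mm k \<in> SSet" "mm e \<notin> SSet" "n \<le> e"
  shows "mm n \<in> ODD \<longleftrightarrow> even (e - n)"
  using assms
proof (induction "e - n" arbitrary: n rule: less_induct)
  case less
  show ?case
  proof (cases "e - n")
    case 0
    then have "n = e" using less.prems by simp
    then show ?thesis using less.prems ODD_unfold[of "mm e"] by simp
  next
    case (Suc r)
    then have n1: "mm n \<in> SSet" using less.prems(1) by simp
    show ?thesis
    proof (cases r)
      case 0
      then have "e = Suc n" using Suc less.prems by simp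
      then have "nxt tr \<delta> (mm n) \<notin> SSet" using less.prems(2) mm_Suc by simp
      then show ?thesis using n1 ODD_unfold[of "mm n"] Suc 0 by simp
    next
      case (Suc r')
      have n2: "mm (Suc n) \<in> SSet" using less.prems(1) \<open>e - n = Suc r\<close> Suc by simp
      have "mm (Suc (Suc n)) \<in> ODD \<longleftrightarrow> even (e - Suc (Suc n))"
        by (rule less.hyps) (use less.prems \<open>e - n = Suc r\<close> Suc in auto)
      moreover have "mm n \<in> ODD \<longleftrightarrow> mm (Suc (Suc n)) \<in> ODD"
        using ODD_unfold[of "mm n"] n1 n2 by (simp add: mm_Suc)
      moreover have "even (e - Suc (Suc n)) \<longleftrightarrow> even (e - n)"
      proof -
        have h: "e - Suc (Suc n) = r'" using \<open>e - n = Suc r\<close> Suc by simp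
        show ?thesis by (simp only: h \<open>e - n = Suc r\<close> Suc) simp
      qed
      ultimately show ?thesis by simp
    qed
  qed
qed

lemma const_from: "(\<forall>k\<ge>a. EqW k) \<Longrightarrow> a \<le> j \<Longrightarrow> \<forall>\<theta>\<in>set ts. (mm j \<in> tsem tr (\<lambda>_. {}) \<theta> \<longleftrightarrow> mm a \<in> tsem tr (\<lambda>_. {}) \<theta>)"
proof (induction j)
  case 0
  then show ?case by simp
next
  case (Suc j)
  show ?case
  proof (cases "a = Suc j")
    case False
    then have aj: "a \<le> j" using Suc.prems by simp
    have ih: "\<forall>\<theta>\<in>set ts. (mm j \<in> tsem tr (\<lambda>_. {}) \<theta> \<longleftrightarrow> mm a \<in> tsem tr (\<lambda>_. {}) \<theta>)"
      by (rule Suc.IH[OF Suc.prems(1) aj])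
    have "EqW j" using Suc.prems(1) aj by blast
    then show ?thesis using ih unfolding EqW_def by blast
  qed simp
qed

lemma inf_run:
  assumes "EqW (Suc n)" "mm (Suc n) \<in> ODD \<longleftrightarrow> mm (Suc (Suc n)) \<in> ODD"
  shows "\<forall>k\<ge>Suc n. EqW k"
proof (rule ccontr)
  assume "\<not> (\<forall>k\<ge>Suc n. EqW k)"
  then have ex: "\<exists>k. Suc n \<le> k \<and> \<not> EqW k" by auto
  define e where "e = (LEAST k. Suc n \<le> k \<and> \<not> EqW k)"
  have e: "Suc n \<le> e" "\<not> EqW e" unfolding e_def using LeastI_ex[OF ex] by auto
  have bef: "\<forall>k. Suc n \<le> k \<and> k < e \<longrightarrow> EqW k" unfolding e_def using not_less_Least by blast
  have "e \<noteq> Suc n" using e assms(1) by auto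
  then have e2: "Suc (Suc n) \<le> e" using e by simp
  have "mm (Suc n) \<in> ODD \<longleftrightarrow> even (e - Suc n)"
    by (rule run_odd) (use bef e in \<open>auto simp: EqW_SSet\<close>)
  moreover have "mm (Suc (Suc n)) \<in> ODD \<longleftrightarrow> even (e - Suc (Suc n))"
    by (rule run_odd) (use bef e e2 in \<open>auto simp: EqW_SSet\<close>)
  moreover have "even (e - Suc n) \<longleftrightarrow> \<not> even (e - Suc (Suc n))"
  proof -
    have "e - Suc n = Suc (e - Suc (Suc n))" using e2 by simp
    then show ?thesis by simp
  qed
  ultimately show False using assms(2) by blast
qed

definition Inv :: "nat \<Rightarrow> bool" where
  "Inv n \<longleftrightarrow> ss n = mm n \<or> (\<exists>p<n. (\<forall>k\<ge>Suc p. EqW k) \<and> mm p < ss n)"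

lemma Inv_all: "Inv n"
proof (induction n)
  case 0
  then show ?case unfolding Inv_def by (simp add: ss_0 mm_0)
next
  case (Suc n)
  from Suc.IH show ?case unfolding Inv_def
  proof
    assume eq: "ss n = mm n"
    show "ss (Suc n) = mm (Suc n) \<or> (\<exists>p<Suc n. (\<forall>k\<ge>Suc p. EqW k) \<and> mm p < ss (Suc n))"
    proof (cases "\<exists>d\<in>set (gam \<delta> ts). (mm n \<in> tsem tr (\<lambda>_. {}) d) \<noteq> (nxt tr \<delta> (mm n) \<in> tsem tr (\<lambda>_. {}) d)")
      case True
      then have "ss (Suc n) = mm (Suc n)" unfolding ss_Suc eq mm_Suc by (rule stut_nxt)
      then show ?thesis by simp
    next
      case False
      then have a: "\<forall>d\<in>set (gam \<delta> ts). (mm n \<in> tsem tr (\<lambda>_. {}) d \<longleftrightarrow> nxt tr \<delta> (mm n) \<in> tsem tr (\<lambda>_. {}) d)"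
        by blast
      have "EqW (Suc n)" using gam_diff(2)[OF a] unfolding EqW_def by (simp add: mm_Suc)
      moreover have "mm (Suc n) \<in> ODD \<longleftrightarrow> mm (Suc (Suc n)) \<in> ODD"
        using gam_diff(1)[OF a] by (simp add: mm_Suc)
      ultimately have "\<forall>k\<ge>Suc n. EqW k" by (rule inf_run)
      moreover have "mm n < ss (Suc n)" unfolding ss_Suc eq[symmetric] by (rule stut_gt)
      ultimately show ?thesis by blast
    qed
  next
    assume "\<exists>p<n. (\<forall>k\<ge>Suc p. EqW k) \<and> mm p < ss n"
    then obtain p where p: "p < n" "\<forall>k\<ge>Suc p. EqW k" "mm p < ss n" by blast
    have "ss n < ss (Suc n)" unfolding ss_Suc by (rule stut_gt)
    then show "ss (Suc n) = mm (Suc n) \<or> (\<exists>p<Suc n. (\<forall>k\<ge>Suc p. EqW k) \<and> mm p < ss (Suc n))"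
      using p by (metis less_Suc_eq less_trans)
  qed
qed

lemma U_first:
  assumes "tfv \<theta> = {}" "k \<le> y" "y \<in> DS tr \<delta>" "\<forall>l. k \<le> l \<and> l < y \<longrightarrow> l \<notin> DS tr \<delta>"
  shows "k \<in> tsem tr V (Until (Ds \<delta>) \<theta>) \<longleftrightarrow> y \<in> tsem tr (\<lambda>_. {}) \<theta>"
proof -
  have "k \<in> tsem tr V (Until (Ds \<delta>) \<theta>) \<longleftrightarrow>
    (\<exists>j\<ge>k. j \<in> DS tr \<delta> \<and> j \<in> tsem tr (\<lambda>_. {}) \<theta> \<and> (\<forall>l. k \<le> l \<and> l < j \<longrightarrow> l \<notin> DS tr \<delta>))"
    by (rule tsem_U[OF cl(1) assms(1)])
  also have "\<dots> \<longleftrightarrow> y \<in> tsem tr (\<lambda>_. {}) \<theta>"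
  proof
    assume "\<exists>j\<ge>k. j \<in> DS tr \<delta> \<and> j \<in> tsem tr (\<lambda>_. {}) \<theta> \<and> (\<forall>l. k \<le> l \<and> l < j \<longrightarrow> l \<notin> DS tr \<delta>)"
    then obtain j where j: "j \<ge> k" "j \<in> DS tr \<delta>" "j \<in> tsem tr (\<lambda>_. {}) \<theta>" "\<forall>l. k \<le> l \<and> l < j \<longrightarrow> l \<notin> DS tr \<delta>"
      by blast
    have "\<not> j < y" using j(1,2) assms(4) by auto
    moreover have "\<not> y < j" using j(4) assms(2,3) by auto
    ultimately have "j = y" by simp
    then show "y \<in> tsem tr (\<lambda>_. {}) \<theta>" using j by simp
  next
    assume "y \<in> tsem tr (\<lambda>_. {}) \<theta>"
    then show "\<exists>j\<ge>k. j \<in> DS tr \<delta> \<and> j \<in> tsem tr (\<lambda>_. {}) \<theta> \<and> (\<forall>l. k \<le> l \<and> l < j \<longrightarrow> l \<notin> DS tr \<delta>)"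
      using assms by blast
  qed
  finally show ?thesis .
qed

lemma orbit:
  assumes "\<theta> \<in> set ts" "1 \<le> n"
  shows "ss n \<in> tsem tr (\<lambda>_. {}) (Until (Ds \<delta>) \<theta>) \<longleftrightarrow> mm n \<in> tsem tr (\<lambda>_. {}) \<theta>"
proof -
  have ct: "tfv \<theta> = {}" using cl assms(1) by auto
  obtain n' where n': "n = Suc n'" using assms(2) by (cases n) auto
  from Inv_all[of n] show ?thesis unfolding Inv_def
  proof
    assume eq: "ss n = mm n"
    have "mm n \<in> DS tr \<delta>" unfolding n' by (rule mm_DS)
    then show ?thesis unfolding eq by (intro U_first[OF ct]) auto
  next
    assume "\<exists>p<n. (\<forall>k\<ge>Suc p. EqW k) \<and> mm p < ss n"
    then obtain p where p: "p < n" "\<forall>k\<ge>Suc p. EqW k" "mm p < ss n" by blast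
    define k where "k = ss n"
    have ex: "\<exists>j. k \<le> j \<and> j \<in> DS tr \<delta>" using DS_unb[OF cl(1), of k tr] by (auto intro: less_imp_le)
    define y where "y = (LEAST j. k \<le> j \<and> j \<in> DS tr \<delta>)"
    have y: "k \<le> y" "y \<in> DS tr \<delta>" unfolding y_def using LeastI_ex[OF ex] by auto
    have ymin: "\<forall>l. k \<le> l \<and> l < y \<longrightarrow> l \<notin> DS tr \<delta>" unfolding y_def using not_less_Least by blast
    define A where "A = {i. mm i < y}"
    have fin: "finite A" unfolding A_def
      by (rule finite_subset[of _ "{..<y}"]) (use mm_ge le_less_trans in auto)
    have pA: "p \<in> A" unfolding A_def using p(3) y(1) k_def by simp
    define q where "q = Max A"
    have qA: "q \<in> A" unfolding q_def using fin pA by (auto intro: Max_in)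
    have pq: "p \<le> q" unfolding q_def using fin pA by (rule Max_ge)
    have "Suc q \<notin> A" using fin q_def by (metis Max_ge Suc_n_not_le_n)
    then have "y \<le> mm (Suc q)" unfolding A_def by simp
    moreover have "mm (Suc q) \<le> y" unfolding mm_Suc
      by (rule nxt_props(4)[OF cl(1)]) (use qA y in \<open>auto simp: A_def\<close>)
    ultimately have yq: "y = mm (Suc q)" by simp
    have "k \<in> tsem tr (\<lambda>_. {}) (Until (Ds \<delta>) \<theta>) \<longleftrightarrow> y \<in> tsem tr (\<lambda>_. {}) \<theta>"
      by (rule U_first[OF ct y ymin])
    also have "\<dots> \<longleftrightarrow> mm (Suc p) \<in> tsem tr (\<lambda>_. {}) \<theta>"
      unfolding yq using const_from[OF p(2), of "Suc q"] pq assms(1) by auto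
    also have "\<dots> \<longleftrightarrow> mm n \<in> tsem tr (\<lambda>_. {}) \<theta>"
      using const_from[OF p(2), of n] p(1) assms(1) by auto
    finally show ?thesis unfolding k_def .
  qed
qed

end


definition tsl :: "('ap, 'n) mf \<Rightarrow> nat \<Rightarrow> 'ap tf list" where
  "tsl \<psi> \<pi> = map fst (filter (\<lambda>x. snd x = \<pi>) (mtestsl \<psi>))"

definition DeltaOf :: "('ap, 'ap tf) mf \<Rightarrow> nat \<Rightarrow> 'ap tf" where
  "DeltaOf \<psi> = (if mnexts \<psi> = {} then (\<lambda>_. TTrue) else (SOME D. D \<in> mnexts \<psi>))"

definition GamOf :: "('ap, 'ap tf) mf \<Rightarrow> nat \<Rightarrow> 'ap tf list" where
  "GamOf \<psi> \<pi> = gam (DeltaOf \<psi> \<pi>) (tsl \<psi> \<pi>)"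

definition TauOf :: "('ap, 'ap tf) mf \<Rightarrow> nat \<Rightarrow> 'ap tf \<Rightarrow> 'ap tf" where
  "TauOf \<psi> \<pi> d = Until (Ds (DeltaOf \<psi> \<pi>)) d"

definition transl :: "('ap, 'ap tf) mf \<Rightarrow> ('ap, 'ap tf list) mf" where
  "transl \<psi> = At (TauOf \<psi>) (GamOf \<psi>) (\<lambda>_. None) \<psi>"

fun hrepl :: "('ap, 'n) hf \<Rightarrow> ('ap, 'm) mf \<Rightarrow> ('ap, 'm) hf" where
  "hrepl (HEx \<pi> p) b = HEx \<pi> (hrepl p b)"
| "hrepl (HAll \<pi> p) b = HAll \<pi> (hrepl p b)"
| "hrepl (HBody p) b = HBody b"

lemma hvars_hrepl[simp]: "hvars (hrepl p b) = hvars p"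
  by (induction p) auto

lemma hbody_hrepl[simp]: "hbody (hrepl p b) = b"
  by (induction p) auto

lemma hclosed_in_iff: "hclosed_in lok B p \<longleftrightarrow> mwf lok (B \<union> hvars p) (hbody p) \<and> mfv (hbody p) = {}"
  by (induction p arbitrary: B) (auto simp: insert_commute)

lemma mwf_lok: "mwf lok H \<psi> \<Longrightarrow> D \<in> mnexts \<psi> \<Longrightarrow> \<pi> \<in> H \<Longrightarrow> lok (D \<pi>)"
  by (induction \<psi>) auto

lemma mwf_tests: "mwf lok H \<psi> \<Longrightarrow> (d, \<pi>) \<in> set (mtestsl \<psi>) \<Longrightarrow> \<pi> \<in> H \<and> tf_ok d"
  by (induction \<psi>) auto

lemma dom_upd': "dom (\<lambda>a. if a = \<pi> then Some tr else \<Pi> a) = insert \<pi> (dom \<Pi>)"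
  by (auto simp: dom_def)

lemma hsat_transfer:
  assumes "dom \<Pi> \<union> hvars p \<subseteq> H"
    "\<forall>\<Pi>'. dom \<Pi>' \<subseteq> H \<longrightarrow> ((\<lambda>_. 0) \<in> msem sN1 \<Pi>' (\<lambda>_. {}) (hbody p) \<longleftrightarrow> (\<lambda>_. 0) \<in> msem sN2 \<Pi>' (\<lambda>_. {}) b)"
  shows "hsat sN1 T \<Pi> p \<longleftrightarrow> hsat sN2 T \<Pi> (hrepl p b)"
  using assms
proof (induction p arbitrary: \<Pi>)
  case (HEx \<pi> q)
  have "hsat sN1 T (\<Pi>(\<pi> := Some tr)) q \<longleftrightarrow> hsat sN2 T (\<Pi>(\<pi> := Some tr)) (hrepl q b)" for tr
  proof (rule HEx.IH)
    show "dom (\<Pi>(\<pi> := Some tr)) \<union> hvars q \<subseteq> H" using HEx.prems(1) by (auto simp: dom_def)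
    show "\<forall>\<Pi>'. dom \<Pi>' \<subseteq> H \<longrightarrow> ((\<lambda>_. 0) \<in> msem sN1 \<Pi>' (\<lambda>_. {}) (hbody q) \<longleftrightarrow> (\<lambda>_. 0) \<in> msem sN2 \<Pi>' (\<lambda>_. {}) b)"
      using HEx.prems(2) by simp
  qed
  then show ?case by simp
next
  case (HAll \<pi> q)
  have "hsat sN1 T (\<Pi>(\<pi> := Some tr)) q \<longleftrightarrow> hsat sN2 T (\<Pi>(\<pi> := Some tr)) (hrepl q b)" for tr
  proof (rule HAll.IH)
    show "dom (\<Pi>(\<pi> := Some tr)) \<union> hvars q \<subseteq> H" using HAll.prems(1) by (auto simp: dom_def)
    show "\<forall>\<Pi>'. dom \<Pi>' \<subseteq> H \<longrightarrow> ((\<lambda>_. 0) \<in> msem sN1 \<Pi>' (\<lambda>_. {}) (hbody q) \<longleftrightarrow> (\<lambda>_. 0) \<in> msem sN2 \<Pi>' (\<lambda>_. {}) b)"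
      using HAll.prems(2) by simp
  qed
  then show ?case by simp
next
  case (HBody q)
  then show ?case by simp
qed

lemma tf_ok_TTrue: "tf_ok (TTrue :: 'ap tf)"
  unfolding tf_ok_def by simp

lemma body_equiv:
  fixes \<psi> :: "('ap, 'ap tf) mf"
  assumes wf: "mwf tf_ok H \<psi>" "mfv \<psi> = {}"
    and un: "\<forall>D1\<in>mnexts \<psi>. \<forall>D2\<in>mnexts \<psi>. \<forall>\<pi>\<in>H. D1 \<pi> = D2 \<pi>"
    and dm: "dom \<Pi> \<subseteq> H"
  shows "(\<lambda>_. 0) \<in> msem succ_mumble \<Pi> (\<lambda>_. {}) \<psi> \<longleftrightarrow> (\<lambda>_. 0) \<in> msem succ_stutter \<Pi> (\<lambda>_. {}) (transl \<psi>)"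
proof -
  define \<Delta> where "\<Delta> = DeltaOf \<psi>"
  have hD: "\<forall>D\<in>mnexts \<psi>. \<forall>\<pi>\<in>H. D \<pi> = \<Delta> \<pi>"
  proof (cases "mnexts \<psi> = {}")
    case False
    then have "\<Delta> \<in> mnexts \<psi>" unfolding \<Delta>_def DeltaOf_def by (simp add: some_in_eq)
    then show ?thesis using un by blast
  qed simp
  have okD: "tf_ok (\<Delta> \<pi>)" if "\<pi> \<in> H" for \<pi>
  proof (cases "mnexts \<psi> = {}")
    case True
    then show ?thesis unfolding \<Delta>_def DeltaOf_def by (simp add: tf_ok_TTrue)
  next
    case False
    then have "\<Delta> \<in> mnexts \<psi>" unfolding \<Delta>_def DeltaOf_def by (simp add: some_in_eq)
    then show ?thesis using mwf_lok[OF wf(1)] that by blast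
  qed
  have okts: "\<forall>\<theta>\<in>set (tsl \<psi> \<pi>). tf_ok \<theta>" for \<pi>
    unfolding tsl_def using mwf_tests[OF wf(1)] by auto
  define tvP :: "'ap tf \<Rightarrow> nat \<Rightarrow> (nat \<Rightarrow> nat) set" where
    "tvP = (\<lambda>d \<pi>. {v. case \<Pi> \<pi> of Some tr \<Rightarrow> v \<pi> \<in> tsem tr (\<lambda>_. {}) d | None \<Rightarrow> False})"
  define M where "M n = (\<lambda>\<pi>. case \<Pi> \<pi> of Some tr \<Rightarrow> (succ_mumble tr (\<Delta> \<pi>) ^^ n) 0 | None \<Rightarrow> 0)" for n
  define S where "S n = (\<lambda>\<pi>. case \<Pi> \<pi> of Some tr \<Rightarrow> (succ_stutter tr (GamOf \<psi> \<pi>) ^^ n) 0 | None \<Rightarrow> 0)" for n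
  have M0: "M 0 = (\<lambda>_. 0)" unfolding M_def by (auto simp: fun_eq_iff split: option.split)
  have S0: "S 0 = (\<lambda>_. 0)" unfolding S_def by (auto simp: fun_eq_iff split: option.split)
  have mo: "mono_ok \<psi>" by (rule mwf_mono_ok[OF wf(1)])
  have sc: "sclosed ((\<lambda>_. None) :: nat \<Rightarrow> ('ap, 'ap tf list) mf option)" unfolding sclosed_def by simp
  have sp: "sprop P ((\<lambda>_. None) :: nat \<Rightarrow> ('ap, 'ap tf list) mf option)" for P unfolding sprop_def by simp
  have mo2: "mono_ok (transl \<psi>)" unfolding transl_def
    by (rule mono_ok_At[OF mo sc sp]) (simp add: wf(2))
  have mn2: "mnexts (transl \<psi>) \<subseteq> {GamOf \<psi>}" unfolding transl_def by (rule mnexts_At[OF sp])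
  have A: "(\<lambda>_. 0) \<in> msem succ_mumble \<Pi> (\<lambda>_. {}) \<psi> \<longleftrightarrow>
      0 \<in> gsem sucN (\<lambda>d \<pi>. M -` tvP d \<pi>) (\<lambda>X. M -` {}) \<psi>"
  proof -
    have "gsem sucN (\<lambda>d \<pi>. M -` tvP d \<pi>) (\<lambda>X. M -` (\<lambda>_. {}) X) \<psi> =
        M -` gsem (succ_vec succ_mumble \<Pi>) tvP (\<lambda>_. {}) \<psi>"
    proof (rule gsem_preimage[OF mo])
      show "\<forall>D\<in>mnexts \<psi>. \<forall>w. M (sucN D w) = succ_vec succ_mumble \<Pi> D (M w)"
      proof (intro ballI allI)
        fix D w assume D: "D \<in> mnexts \<psi>"
        show "M (sucN D w) = succ_vec succ_mumble \<Pi> D (M w)"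
        proof
          fix \<pi>
          show "M (sucN D w) \<pi> = succ_vec succ_mumble \<Pi> D (M w) \<pi>"
          proof (cases "\<Pi> \<pi>")
            case None
            then show ?thesis unfolding M_def succ_vec_def by simp
          next
            case (Some tr)
            then have "\<pi> \<in> H" using dm by auto
            then have "D \<pi> = \<Delta> \<pi>" using hD D by blast
            then show ?thesis unfolding M_def succ_vec_def sucN_def using Some by simp
          qed
        qed
      qed
    qed
    then show ?thesis unfolding msem_gsem tvP_def[symmetric] using M0 by (metis vimage_eq)
  qed
  have B: "(\<lambda>_. 0) \<in> msem succ_stutter \<Pi> (\<lambda>_. {}) (transl \<psi>) \<longleftrightarrow>
      0 \<in> gsem sucN (\<lambda>d \<pi>. S -` tvP d \<pi>) (\<lambda>X. S -` {}) (transl \<psi>)"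
  proof -
    have "gsem sucN (\<lambda>d \<pi>. S -` tvP d \<pi>) (\<lambda>X. S -` (\<lambda>_. {}) X) (transl \<psi>) =
        S -` gsem (succ_vec succ_stutter \<Pi>) tvP (\<lambda>_. {}) (transl \<psi>)"
    proof (rule gsem_preimage[OF mo2])
      show "\<forall>D\<in>mnexts (transl \<psi>). \<forall>w. S (sucN D w) = succ_vec succ_stutter \<Pi> D (S w)"
      proof (intro ballI allI)
        fix D w assume D: "D \<in> mnexts (transl \<psi>)"
        then have DG: "D = GamOf \<psi>" using mn2 by blast
        show "S (sucN D w) = succ_vec succ_stutter \<Pi> D (S w)"
        proof
          fix \<pi>
          show "S (sucN D w) \<pi> = succ_vec succ_stutter \<Pi> D (S w) \<pi>"
          proof (cases "\<Pi> \<pi>")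
            case None
            then show ?thesis unfolding S_def succ_vec_def by simp
          next
            case (Some tr)
            then show ?thesis unfolding S_def succ_vec_def sucN_def DG by simp
          qed
        qed
      qed
    qed
    then show ?thesis unfolding msem_gsem tvP_def[symmetric] using S0 by (metis vimage_eq)
  qed
  have C: "0 \<in> gsem sucN (\<lambda>d \<pi>. S -` tvP d \<pi>) (\<lambda>_. {}) (At (TauOf \<psi>) (GamOf \<psi>) (\<lambda>_. None) \<psi>)
      \<longleftrightarrow> 0 \<in> gsem sucN (\<lambda>d \<pi>. M -` tvP d \<pi>) (\<lambda>_. {}) \<psi>"
  proof (rule At_correct[OF mo])
    show "good0 (\<lambda>d \<pi>. M -` tvP d \<pi>) (\<lambda>d \<pi>. S -` tvP d \<pi>) (TauOf \<psi>) (mtestsl \<psi>)"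
      unfolding good0_def
    proof (intro ballI, clarify, intro conjI)
      fix d \<pi> assume dp: "(d, \<pi>) \<in> set (mtestsl \<psi>)"
      have dt: "d \<in> set (tsl \<psi> \<pi>)" unfolding tsl_def using dp by force
      have piH: "\<pi> \<in> H" using mwf_tests[OF wf(1) dp] by simp
      show "(0 \<in> S -` tvP d \<pi>) = (0 \<in> M -` tvP d \<pi>)" using S0 M0 by simp
      show "S -` tvP (TauOf \<psi> \<pi> d) \<pi> \<inter> {1..} = M -` tvP d \<pi> \<inter> {1..}"
      proof (intro set_eqI)
        fix n
        show "n \<in> S -` tvP (TauOf \<psi> \<pi> d) \<pi> \<inter> {1..} \<longleftrightarrow> n \<in> M -` tvP d \<pi> \<inter> {1..}"
        proof (cases "\<Pi> \<pi>")
          case None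
          then show ?thesis unfolding tvP_def by simp
        next
          case (Some tr)
          show ?thesis
          proof (cases "1 \<le> n")
            case True
            have o: "ss tr (\<Delta> \<pi>) (tsl \<psi> \<pi>) n \<in> tsem tr (\<lambda>_. {}) (Until (Ds (\<Delta> \<pi>)) d) \<longleftrightarrow>
                mm tr (\<Delta> \<pi>) n \<in> tsem tr (\<lambda>_. {}) d"
              by (rule orbit[OF okD[OF piH] okts dt True])
            have e1: "ss tr (\<Delta> \<pi>) (tsl \<psi> \<pi>) n = S n \<pi>"
              unfolding S_def GamOf_def \<Delta>_def[symmetric] using Some
              by (simp add: ss_def[OF okD[OF piH] okts])
            have e2: "mm tr (\<Delta> \<pi>) n = M n \<pi>"
              unfolding M_def using Some by (simp add: mm_def[OF okD[OF piH] okts])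
            have o': "S n \<pi> \<in> tsem tr (\<lambda>_. {}) (Until (Ds (\<Delta> \<pi>)) d) \<longleftrightarrow> M n \<pi> \<in> tsem tr (\<lambda>_. {}) d"
              using o unfolding e1 e2 .
            show ?thesis using o' True Some unfolding tvP_def TauOf_def \<Delta>_def by simp
          qed simp
        qed
      qed
    qed
    show "mfv \<psi> \<subseteq> {X. ((\<lambda>_. None) :: nat \<Rightarrow> ('ap, 'ap tf list) mf option) X \<noteq> None}" using wf(2) by simp
    show "sclosed ((\<lambda>_. None) :: nat \<Rightarrow> ('ap, 'ap tf list) mf option)" by (rule sc)
    show "envok ((\<lambda>_. None) :: nat \<Rightarrow> ('ap, 'ap tf list) mf option) (\<lambda>_. {}) (gsem sucN (\<lambda>d \<pi>. S -` tvP d \<pi>) (\<lambda>_. {}))"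
      unfolding envok_def by simp
  qed
  show ?thesis using A B C unfolding transl_def by simp
qed


lemma DeltaOf_ok: "mwf tf_ok H \<psi> \<Longrightarrow> \<pi> \<in> H \<Longrightarrow> tf_ok (DeltaOf \<psi> \<pi>)"
proof (cases "mnexts \<psi> = {}")
  case True
  then show ?thesis unfolding DeltaOf_def by (simp add: tf_ok_TTrue)
next
  case False
  assume a: "mwf tf_ok H \<psi>" "\<pi> \<in> H"
  from False have "DeltaOf \<psi> \<in> mnexts \<psi>" unfolding DeltaOf_def by (simp add: some_in_eq)
  then show ?thesis using mwf_lok[OF a(1)] a(2) by blast
qed

theorem lemma6p5:
  fixes \<phi> :: "('ap::finite) mumbling_hf"
  assumes "mumbling_closed \<phi>" and "unique_mumbling \<phi>"
  shows "\<exists>\<phi>' :: 'ap stuttering_hf. stuttering_closed \<phi>' \<and> unique_stuttering \<phi>' \<and>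
           (\<forall>T :: 'ap trace set. mumbling_models T \<phi> \<longleftrightarrow> stuttering_models T \<phi>')"
proof -
  define \<psi> where "\<psi> = hbody \<phi>"
  define H where "H = hvars \<phi>"
  have c: "mwf tf_ok H \<psi>" "mfv \<psi> = {}"
    using assms(1) unfolding mumbling_closed_def hclosed_def hclosed_in_iff \<psi>_def H_def by auto
  have un: "\<forall>D1\<in>mnexts \<psi>. \<forall>D2\<in>mnexts \<psi>. \<forall>\<pi>\<in>H. D1 \<pi> = D2 \<pi>"
    using assms(2) unfolding unique_mumbling_def hunique_def \<psi>_def H_def by blast
  define \<phi>' where "\<phi>' = hrepl \<phi> (transl \<psi>)"
  have okts: "\<forall>\<theta>\<in>set (tsl \<psi> \<pi>). tf_ok \<theta>" for \<pi>
    unfolding tsl_def using mwf_tests[OF c(1)] by auto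
  have sc: "sclosed ((\<lambda>_. None) :: nat \<Rightarrow> ('ap, 'ap tf list) mf option)" unfolding sclosed_def by simp
  have sp: "sprop P ((\<lambda>_. None) :: nat \<Rightarrow> ('ap, 'ap tf list) mf option)" for P unfolding sprop_def by simp
  have w: "mwf (\<lambda>g. \<forall>d\<in>set g. tf_ok d) H (transl \<psi>)" unfolding transl_def
  proof (rule mwf_At[OF c(1)])
    show "\<forall>\<pi>\<in>H. \<forall>d\<in>set (GamOf \<psi> \<pi>). tf_ok d"
      unfolding GamOf_def using tf_ok_gam[OF okts DeltaOf_ok[OF c(1)]] by blast
    show "\<forall>(d,\<pi>)\<in>set (mtestsl \<psi>). tf_ok (TauOf \<psi> \<pi> d)"
      unfolding TauOf_def using mwf_tests[OF c(1)] DeltaOf_ok[OF c(1)] tf_ok_U by fast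
  qed (use sc sp c(2) in auto)
  have f: "mfv (transl \<psi>) = {}" unfolding transl_def by (rule mfv_At[OF sc]) (simp add: c(2))
  have "stuttering_closed \<phi>'"
    unfolding stuttering_closed_def hclosed_def hclosed_in_iff \<phi>'_def using w f H_def by simp
  moreover have "unique_stuttering \<phi>'"
  proof -
    have "mnexts (transl \<psi>) \<subseteq> {GamOf \<psi>}" unfolding transl_def by (rule mnexts_At[OF sp])
    then show ?thesis unfolding unique_stuttering_def hunique_def \<phi>'_def by auto
  qed
  moreover have "mumbling_models T \<phi> \<longleftrightarrow> stuttering_models T \<phi>'" for T
    unfolding mumbling_models_def stuttering_models_def hmodels_def \<phi>'_def
  proof (rule hsat_transfer)
    show "dom (\<lambda>_. None) \<union> hvars \<phi> \<subseteq> H" unfolding H_def by simp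
    show "\<forall>\<Pi>'. dom \<Pi>' \<subseteq> H \<longrightarrow>
      ((\<lambda>_. 0) \<in> msem succ_mumble \<Pi>' (\<lambda>_. {}) (hbody \<phi>)) = ((\<lambda>_. 0) \<in> msem succ_stutter \<Pi>' (\<lambda>_. {}) (transl \<psi>))"
      unfolding \<psi>_def[symmetric] using body_equiv[OF c un] by blast
  qed
  ultimately show ?thesis by blast
qed


end
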